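(* Let $n\ge3$. Then $\mathcal{PI}^{\ast}_n$ is generated as a semigroup by $\mathcal{S}_n\cup\{\gamma_{1,2},\gamma_{1,2}^{-1}\}$.
   Context: Let $X=\{1,\dots,n\}$, $X'=\{1',\dots,n'\}$. $\mathcal{PI}^{\ast}_n$ is the set of partitions of $X\cup X'$ each of whose blocks is a singleton (point) or a generalised line (a set meeting both $X$ and $X'$), with product $\star$: with $X''$ a third copy of $X$, regard $\alpha$ as a partition of $X\cup X''$ and $\beta$ as a partition of $X''\cup X'$, let $\sim$ be the equivalence on $X\cup X''\cup X'$ generated by the blocks of both; $\alpha\star\beta$ is the partition of $X\cup X'$ in which distinct $u,v$ are in one block iff $u\sim v$ and the $\sim$-class of $u$ contains no singleton block of $\alpha$ or $\beta$. $\mathcal{S}_n$ is the group of units (elements all of whose blocks are $\{x,\pi(x)'\}$, $\pi$ a permutation). $\gamma_{1,2}$ has blocks $\{1,2,1'\}$, $\{2'\}$ and $\{t,t'\}$ for $3\le t\le n$; $\gamma_{1,2}^{-1}$ has blocks $\{1,1',2'\}$, $\{2\}$ and $\{t,t'\}$ for $3\le t\le n$. *)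

theory Defs
  imports Main
begin

text \<open>Points of X \<union> X': Inl x stands for x, Inr x stands for x'.
  A partition is represented as its set of blocks.\<close>
type_synonym pt = "nat + nat"
type_synonym bpart = "pt set set"

definition carrierX :: "nat \<Rightarrow> pt set" where
  "carrierX n = Inl ` {1..n} \<union> Inr ` {1..n}"

definition is_partition_of :: "'a set \<Rightarrow> 'a set set \<Rightarrow> bool" where
  "is_partition_of A P \<longleftrightarrow> \<Union>P = A \<and> {} \<notin> P \<and>
      (\<forall>B\<in>P. \<forall>C\<in>P. B \<noteq> C \<longrightarrow> B \<inter> C = {})"

definition PIstar :: "nat \<Rightarrow> bpart set" where
  "PIstar n = {P. is_partition_of (carrierX n) P \<and>
      (\<forall>B\<in>P. (\<exists>u. B = {u}) \<or>
               ((\<exists>x. Inl x \<in> B) \<and> (\<exists>x. Inr x \<in> B)))}"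

text \<open>Three copies X, X'', X' encoded as (i,0), (i,1), (i,2).\<close>
fun emb1 :: "pt \<Rightarrow> nat \<times> nat" where
  "emb1 (Inl x) = (x, 0)" | "emb1 (Inr x) = (x, 1)"
fun emb2 :: "pt \<Rightarrow> nat \<times> nat" where
  "emb2 (Inl x) = (x, 1)" | "emb2 (Inr x) = (x, 2)"
fun embo :: "pt \<Rightarrow> nat \<times> nat" where
  "embo (Inl x) = (x, 0)" | "embo (Inr x) = (x, 2)"

definition joint_blocks :: "bpart \<Rightarrow> bpart \<Rightarrow> (nat \<times> nat) set set" where
  "joint_blocks a b = (image emb1) ` a \<union> (image emb2) ` b"

definition joint_sim :: "bpart \<Rightarrow> bpart \<Rightarrow> ((nat \<times> nat) \<times> (nat \<times> nat)) set" where
  "joint_sim a b = (\<Union>B\<in>joint_blocks a b. B \<times> B)\<^sup>*"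

definition singleton_pts :: "bpart \<Rightarrow> bpart \<Rightarrow> (nat \<times> nat) set" where
  "singleton_pts a b = \<Union>{B \<in> joint_blocks a b. \<exists>w. B = {w}}"

definition star_rel :: "nat \<Rightarrow> bpart \<Rightarrow> bpart \<Rightarrow> pt rel" where
  "star_rel n a b = {(u, v). u \<in> carrierX n \<and> v \<in> carrierX n \<and>
      (u = v \<or> ((embo u, embo v) \<in> joint_sim a b \<and>
          \<not> (\<exists>w. (embo u, w) \<in> joint_sim a b \<and> w \<in> singleton_pts a b)))}"

definition star :: "nat \<Rightarrow> bpart \<Rightarrow> bpart \<Rightarrow> bpart" where
  "star n a b = carrierX n // star_rel n a b"

definition units :: "nat \<Rightarrow> bpart set" where
  "units n = {P. \<exists>\<pi>. bij_betw \<pi> {1..n} {1..n} \<and>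
      P = (\<lambda>x. {Inl x, Inr (\<pi> x)}) ` {1..n}}"

definition gamma12 :: "nat \<Rightarrow> bpart" where
  "gamma12 n = {{Inl 1, Inl 2, Inr 1}, {Inr 2}} \<union> (\<lambda>t. {Inl t, Inr t}) ` {3..n}"

definition gamma12_inv :: "nat \<Rightarrow> bpart" where
  "gamma12_inv n = {{Inl 1, Inr 1, Inr 2}, {Inl 2}} \<union> (\<lambda>t. {Inl t, Inr t}) ` {3..n}"

inductive_set semigen :: "nat \<Rightarrow> bpart set \<Rightarrow> bpart set" for n A where
  base: "a \<in> A \<Longrightarrow> a \<in> semigen n A"
| prod: "a \<in> semigen n A \<Longrightarrow> b \<in> semigen n A \<Longrightarrow> star n a b \<in> semigen n A"

end

theory Submission
  imports Defs
begin


fun swp :: "pt \<Rightarrow> pt" where "swp (Inl x) = Inr x" | "swp (Inr x) = Inl x"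

definition flipP :: "bpart \<Rightarrow> bpart" where "flipP P = (image swp) ` P"

definition rel :: "nat \<Rightarrow> (pt \<Rightarrow> 'c option) \<Rightarrow> pt rel" where
  "rel n L = {(u,v). u \<in> carrierX n \<and> v \<in> carrierX n \<and> (u = v \<or> (L u \<noteq> None \<and> L u = L v))}"

definition mk :: "nat \<Rightarrow> (pt \<Rightarrow> 'c option) \<Rightarrow> bpart" where
  "mk n L = carrierX n // rel n L"

definition wfL :: "nat \<Rightarrow> (pt \<Rightarrow> 'c option) \<Rightarrow> bool" where
  "wfL n L \<longleftrightarrow> (\<forall>u\<in>carrierX n. L u \<noteq> None \<longrightarrow>
     (\<exists>x\<in>{1..n}. L (Inl x) = L u) \<and> (\<exists>y\<in>{1..n}. L (Inr y) = L u))"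

lemma carrier_Inl[simp]: "Inl x \<in> carrierX n \<longleftrightarrow> x \<in> {1..n}"
  by (auto simp: carrierX_def)
lemma carrier_Inr[simp]: "Inr x \<in> carrierX n \<longleftrightarrow> x \<in> {1..n}"
  by (auto simp: carrierX_def)

lemma equiv_rel: "equiv (carrierX n) (rel n L)"
proof (rule equivI)
  show "rel n L \<subseteq> carrierX n \<times> carrierX n" by (auto simp: rel_def)
  show "refl_on (carrierX n) (rel n L)" by (rule refl_onI) (auto simp: rel_def)
  show "sym (rel n L)"
  proof (rule symI)
    fix x y assume h: "(x,y) \<in> rel n L"
    then have "x \<in> carrierX n" "y \<in> carrierX n" "x = y \<or> (L x \<noteq> None \<and> L x = L y)"
      by (auto simp: rel_def)
    then show "(y,x) \<in> rel n L" unfolding rel_def by (simp only: mem_Collect_eq case_prod_conv) metis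
  qed
  show "trans (rel n L)"
  proof (rule transI)
    fix x y z assume "(x,y) \<in> rel n L" "(y,z) \<in> rel n L"
    thus "(x,z) \<in> rel n L" unfolding rel_def by auto
  qed
qed

lemma rel_class: "u \<in> carrierX n \<Longrightarrow>
  rel n L `` {u} = (if L u = None then {u} else {v \<in> carrierX n. L v = L u})"
  unfolding rel_def by auto

lemma mk_eq: "mk n L = (\<lambda>u. rel n L `` {u}) ` carrierX n"
  unfolding mk_def quotient_def by auto

lemma mk_cong:
  assumes "\<And>u. u \<in> carrierX n \<Longrightarrow> L1 u = map_option h (L2 u)" and "inj h"
  shows "mk n L1 = mk n L2"
proof -
  have i: "inj (map_option h)" using option.inj_map[OF assms(2)] .
  have "\<And>u v. u \<in> carrierX n \<Longrightarrow> v \<in> carrierX n \<Longrightarrow>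
     (L1 u \<noteq> None \<and> L1 u = L1 v) = (L2 u \<noteq> None \<and> L2 u = L2 v)"
    using assms(1) i by (simp add: inj_eq)
  hence "rel n L1 = rel n L2"
    unfolding rel_def by blast
  thus ?thesis by (simp add: mk_def)
qed

lemma mk_class_in: "u \<in> carrierX n \<Longrightarrow> rel n L `` {u} \<in> mk n L"
  by (auto simp: mk_eq)

lemma mk_blockE:
  assumes "B \<in> mk n L"
  obtains u where "u \<in> carrierX n" "B = rel n L `` {u}"
  using assms by (auto simp: mk_eq)

lemma wf_nonsingle:
  assumes "wfL n L" "u \<in> carrierX n" "L u \<noteq> None"
  shows "\<not> (\<exists>w. rel n L `` {u} = {w})"
proof -
  obtain x y where xy: "x \<in> {1..n}" "L (Inl x) = L u" "y \<in> {1..n}" "L (Inr y) = L u"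
    using assms unfolding wfL_def by blast
  have "Inl x \<in> rel n L `` {u}" "Inr y \<in> rel n L `` {u}"
    using xy assms(2,3) by (auto simp: rel_class)
  thus ?thesis by (metis Inl_Inr_False singletonD)
qed

lemma single_iff:
  assumes "wfL n L" "u \<in> carrierX n"
  shows "(\<exists>w. rel n L `` {u} = {w}) \<longleftrightarrow> L u = None"
  using wf_nonsingle[OF assms] assms(2) by (auto simp: rel_class)

lemma mk_PIstar:
  assumes "wfL n L"
  shows "mk n L \<in> PIstar n"
proof -
  have e: "equiv (carrierX n) (rel n L)" by (rule equiv_rel)
  have part: "is_partition_of (carrierX n) (mk n L)"
    unfolding is_partition_of_def mk_def
    using Union_quotient[OF e] in_quotient_imp_non_empty[OF e] quotient_disj[OF e] by blast
  have "\<forall>B\<in>mk n L. (\<exists>u. B = {u}) \<or> ((\<exists>x. Inl x \<in> B) \<and> (\<exists>x. Inr x \<in> B))"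
  proof
    fix B assume "B \<in> mk n L"
    then obtain u where u: "u \<in> carrierX n" "B = rel n L `` {u}" by (rule mk_blockE)
    show "(\<exists>u. B = {u}) \<or> ((\<exists>x. Inl x \<in> B) \<and> (\<exists>x. Inr x \<in> B))"
    proof (cases "L u = None")
      case True thus ?thesis using u by (auto simp: rel_class)
    next
      case False
      obtain x y where xy: "x \<in> {1..n}" "L (Inl x) = L u" "y \<in> {1..n}" "L (Inr y) = L u"
        using assms u False unfolding wfL_def by blast
      have "Inl x \<in> B" "Inr y \<in> B"
        using xy u False by (auto simp: rel_class)
      thus ?thesis by blast
    qed
  qed
  thus ?thesis using part by (simp add: PIstar_def)
qed

lemma PIstar_mk:
  assumes "P \<in> PIstar n"
  shows "\<exists>L::pt \<Rightarrow> pt set option. wfL n L \<and> P = mk n L"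
proof -
  have part: "is_partition_of (carrierX n) P"
    and lines: "\<forall>B\<in>P. (\<exists>u. B = {u}) \<or> ((\<exists>x. Inl x \<in> B) \<and> (\<exists>x. Inr x \<in> B))"
    using assms by (auto simp: PIstar_def)
  have disj: "\<And>B C. B \<in> P \<Longrightarrow> C \<in> P \<Longrightarrow> B \<noteq> C \<Longrightarrow> B \<inter> C = {}"
    and UP: "\<Union>P = carrierX n" and ne: "{} \<notin> P"
    using part unfolding is_partition_of_def by auto
  define blk where "blk u = (THE B. B \<in> P \<and> u \<in> B)" for u
  have blk_uniq: "blk u = B" if "B \<in> P" "u \<in> B" for u B
  proof -
    have "\<And>B'. B' \<in> P \<and> u \<in> B' \<Longrightarrow> B' = B"
      using disj that by (metis IntI empty_iff)
    thus ?thesis unfolding blk_def using that by (intro the_equality) blast+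
  qed
  have blk_in: "blk u \<in> P \<and> u \<in> blk u" if "u \<in> carrierX n" for u
  proof -
    have "u \<in> \<Union>P" using UP that by simp
    then obtain B where B: "B \<in> P" "u \<in> B" by (rule UnionE)
    have "blk u = B" by (rule blk_uniq[OF B])
    thus ?thesis using B by simp
  qed
  have sub: "B \<subseteq> carrierX n" if "B \<in> P" for B
    using UP that by (metis Union_upper)
  define L where "L u = (if \<exists>w. blk u = {w} then None else Some (blk u))" for u
  have cls: "rel n L `` {u} = blk u" if u: "u \<in> carrierX n" for u
  proof (cases "\<exists>w. blk u = {w}")
    case True
    then have "blk u = {u}" using blk_in[OF u] by auto
    thus ?thesis using True u by (simp add: rel_class L_def)
  next
    case False
    have "{v \<in> carrierX n. L v = L u} = blk u"
    proof
      show "{v \<in> carrierX n. L v = L u} \<subseteq> blk u"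
        using False blk_in by (auto simp: L_def split: if_splits)
      show "blk u \<subseteq> {v \<in> carrierX n. L v = L u}"
      proof
        fix v assume v: "v \<in> blk u"
        have vc: "v \<in> carrierX n" using v sub blk_in[OF u] by blast
        have "blk v = blk u" using blk_uniq[of "blk u" v] blk_in[OF u] v by auto
        thus "v \<in> {v \<in> carrierX n. L v = L u}" using vc by (simp add: L_def)
      qed
    qed
    thus ?thesis using False u by (simp add: rel_class L_def)
  qed
  have "P = mk n L"
  proof
    show "P \<subseteq> mk n L"
    proof
      fix B assume B: "B \<in> P"
      then obtain u where u: "u \<in> B" using ne by (metis all_not_in_conv)
      then have uc: "u \<in> carrierX n" using sub B by blast
      have "B = blk u" using blk_uniq[OF B u] by simp
      thus "B \<in> mk n L" using cls[OF uc] mk_class_in[OF uc, of L] by simp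
    qed
    show "mk n L \<subseteq> P"
    proof
      fix B assume "B \<in> mk n L"
      then obtain u where "u \<in> carrierX n" "B = rel n L `` {u}" by (rule mk_blockE)
      thus "B \<in> P" using cls blk_in by simp
    qed
  qed
  moreover have "wfL n L"
    unfolding wfL_def
  proof (intro ballI impI)
    fix u assume u: "u \<in> carrierX n" and "L u \<noteq> None"
    then have ns: "\<not> (\<exists>w. blk u = {w})" by (auto simp: L_def split: if_splits)
    have "blk u \<in> P" using blk_in[OF u] by simp
    then have "(\<exists>x. Inl x \<in> blk u) \<and> (\<exists>x. Inr x \<in> blk u)" using lines ns by blast
    then obtain x y where xy: "Inl x \<in> blk u" "Inr y \<in> blk u" by blast
    have "Inl x \<in> carrierX n" "Inr y \<in> carrierX n" using xy sub blk_in[OF u] by blast+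
    hence "x \<in> {1..n}" "y \<in> {1..n}" by simp_all
    moreover have "blk (Inl x) = blk u" "blk (Inr y) = blk u"
      using blk_uniq blk_in[OF u] xy by auto
    moreover have "L (Inl x) = L u" "L (Inr y) = L u"
      using calculation(3,4) ns unfolding L_def by simp_all
    ultimately show "(\<exists>x\<in>{1..n}. L (Inl x) = L u) \<and> (\<exists>y\<in>{1..n}. L (Inr y) = L u)"
      by blast
  qed
  ultimately show ?thesis by blast
qed



lemma inj_emb1: "inj emb1"
proof (rule injI)
  fix u v show "emb1 u = emb1 v \<Longrightarrow> u = v" by (cases u; cases v) auto
qed
lemma inj_emb2: "inj emb2"
proof (rule injI)
  fix u v show "emb2 u = emb2 v \<Longrightarrow> u = v" by (cases u; cases v) auto
qed

lemma mk_block_rel: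
  assumes "C \<in> mk n L" "v \<in> C" "w \<in> C"
  shows "(v, w) \<in> rel n L"
  using quotient_eq_iff[OF equiv_rel assms(1)[unfolded mk_def] assms(1)[unfolded mk_def] assms(2,3)]
  by simp

definition condK :: "nat \<Rightarrow> (pt \<Rightarrow> 'a option) \<Rightarrow> (pt \<Rightarrow> 'b option) \<Rightarrow> (nat \<times> nat \<Rightarrow> 'd) \<Rightarrow> 'd \<Rightarrow> bool" where
  "condK n La Lb K k \<longleftrightarrow> (\<forall>u'\<in>carrierX n. La u' = None \<longrightarrow> K (emb1 u') \<noteq> k) \<and>
     (\<forall>u'\<in>carrierX n. Lb u' = None \<longrightarrow> K (emb2 u') \<noteq> k)"

definition GLc :: "nat \<Rightarrow> (pt \<Rightarrow> 'a option) \<Rightarrow> (pt \<Rightarrow> 'b option) \<Rightarrow> (nat \<times> nat \<Rightarrow> 'd) \<Rightarrow> pt \<Rightarrow> 'd option" where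
  "GLc n La Lb K u = (if condK n La Lb K (K (embo u)) then Some (K (embo u)) else None)"

lemma singleton_pts_mk:
  assumes wfa: "wfL n La" and wfb: "wfL n Lb"
  shows "w \<in> singleton_pts (mk n La) (mk n Lb) \<longleftrightarrow>
    (\<exists>u\<in>carrierX n. La u = None \<and> w = emb1 u) \<or> (\<exists>u\<in>carrierX n. Lb u = None \<and> w = emb2 u)"
proof
  assume "w \<in> singleton_pts (mk n La) (mk n Lb)"
  then obtain B where B: "B \<in> joint_blocks (mk n La) (mk n Lb)" "B = {w}"
    unfolding singleton_pts_def by blast
  show "(\<exists>u\<in>carrierX n. La u = None \<and> w = emb1 u) \<or> (\<exists>u\<in>carrierX n. Lb u = None \<and> w = emb2 u)"
  proof (cases "B \<in> (image emb1) ` (mk n La)")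
    case True
    then obtain C where C: "C \<in> mk n La" "B = emb1 ` C" by blast
    then obtain u0 where u0: "u0 \<in> carrierX n" "C = rel n La `` {u0}" by (metis mk_blockE)
    have "u0 \<in> C" using u0 equiv_class_self[OF equiv_rel] by simp
    hence w: "emb1 u0 = w" using B C by auto
    have "La u0 = None"
    proof (rule ccontr)
      assume "La u0 \<noteq> None"
      then obtain x y where xy: "x \<in> {1..n}" "La (Inl x) = La u0" "y \<in> {1..n}" "La (Inr y) = La u0"
        using wfa u0 unfolding wfL_def by blast
      have "Inl x \<in> C" "Inr y \<in> C" using xy u0 \<open>La u0 \<noteq> None\<close> by (auto simp: rel_class)
      hence "emb1 (Inl x) \<in> {w}" "emb1 (Inr y) \<in> {w}" using B C by blast+
      hence "emb1 (Inl x) = w" "emb1 (Inr y) = w" by simp_all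
      thus False by auto
    qed
    thus ?thesis using w u0 by blast
  next
    case False
    then obtain C where C: "C \<in> mk n Lb" "B = emb2 ` C" using B unfolding joint_blocks_def by blast
    then obtain u0 where u0: "u0 \<in> carrierX n" "C = rel n Lb `` {u0}" by (metis mk_blockE)
    have "u0 \<in> C" using u0 equiv_class_self[OF equiv_rel] by simp
    hence w: "emb2 u0 = w" using B C by auto
    have "Lb u0 = None"
    proof (rule ccontr)
      assume "Lb u0 \<noteq> None"
      then obtain x y where xy: "x \<in> {1..n}" "Lb (Inl x) = Lb u0" "y \<in> {1..n}" "Lb (Inr y) = Lb u0"
        using wfb u0 unfolding wfL_def by blast
      have "Inl x \<in> C" "Inr y \<in> C" using xy u0 \<open>Lb u0 \<noteq> None\<close> by (auto simp: rel_class)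
      hence "emb2 (Inl x) \<in> {w}" "emb2 (Inr y) \<in> {w}" using B C by blast+
      hence "emb2 (Inl x) = w" "emb2 (Inr y) = w" by simp_all
      hence "(x, Suc 0) = (y, (2::nat))" by simp
      thus False by simp
    qed
    thus ?thesis using w u0 by blast
  qed
next
  assume "(\<exists>u\<in>carrierX n. La u = None \<and> w = emb1 u) \<or> (\<exists>u\<in>carrierX n. Lb u = None \<and> w = emb2 u)"
  thus "w \<in> singleton_pts (mk n La) (mk n Lb)"
  proof
    assume "\<exists>u\<in>carrierX n. La u = None \<and> w = emb1 u"
    then obtain u where u: "u \<in> carrierX n" "La u = None" "w = emb1 u" by blast
    have "rel n La `` {u} = {u}" using u by (simp add: rel_class)
    hence "{u} \<in> mk n La" using mk_class_in[OF u(1), of La] by simp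
    hence "{w} \<in> joint_blocks (mk n La) (mk n Lb)" using u unfolding joint_blocks_def by force
    thus ?thesis unfolding singleton_pts_def by blast
  next
    assume "\<exists>u\<in>carrierX n. Lb u = None \<and> w = emb2 u"
    then obtain u where u: "u \<in> carrierX n" "Lb u = None" "w = emb2 u" by blast
    have "rel n Lb `` {u} = {u}" using u by (simp add: rel_class)
    hence "{u} \<in> mk n Lb" using mk_class_in[OF u(1), of Lb] by simp
    hence "{w} \<in> joint_blocks (mk n La) (mk n Lb)" using u unfolding joint_blocks_def by force
    thus ?thesis unfolding singleton_pts_def by blast
  qed
qed

lemma GEN:
  assumes wfa: "wfL n La" and wfb: "wfL n Lb"
  and K1: "\<And>u v. u \<in> carrierX n \<Longrightarrow> v \<in> carrierX n \<Longrightarrow> La u \<noteq> None \<Longrightarrow> La v = La u \<Longrightarrow> K (emb1 u) = K (emb1 v)"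
  and K2: "\<And>u v. u \<in> carrierX n \<Longrightarrow> v \<in> carrierX n \<Longrightarrow> Lb u \<noteq> None \<Longrightarrow> Lb v = Lb u \<Longrightarrow> K (emb2 u) = K (emb2 v)"
  and K3: "\<And>p q. K p = K q \<Longrightarrow> (p, q) \<in> joint_sim (mk n La) (mk n Lb)"
  shows "star n (mk n La) (mk n Lb) = mk n (GLc n La Lb K)"
proof -
  let ?js = "joint_sim (mk n La) (mk n Lb)"
  have js: "?js = {(p,q). K p = K q}"
  proof
    show "{(p,q). K p = K q} \<subseteq> ?js" using K3 by auto
    show "?js \<subseteq> {(p,q). K p = K q}"
    proof
      fix pq assume "pq \<in> ?js"
      then obtain p q where pq: "pq = (p,q)" "(p,q) \<in> ?js" by (cases pq) auto
      from pq(2) have "K p = K q" unfolding joint_sim_def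
      proof (induction rule: rtrancl_induct)
        case base thus ?case by simp
      next
        case (step y z)
        then obtain B where B: "B \<in> joint_blocks (mk n La) (mk n Lb)" "y \<in> B" "z \<in> B" by blast
        have "K y = K z"
        proof (cases "B \<in> (image emb1) ` (mk n La)")
          case True
          then obtain C where C: "C \<in> mk n La" "B = emb1 ` C" by blast
          then obtain v w where vw: "v \<in> C" "w \<in> C" "y = emb1 v" "z = emb1 w" using B by blast
          have "(v,w) \<in> rel n La" by (rule mk_block_rel[OF C(1) vw(1,2)])
          hence "v \<in> carrierX n" "w \<in> carrierX n" "v = w \<or> (La v \<noteq> None \<and> La w = La v)"
            unfolding rel_def by auto
          thus ?thesis using vw K1[of v w] by auto
        next
          case False
          then obtain C where C: "C \<in> mk n Lb" "B = emb2 ` C" using B unfolding joint_blocks_def by blast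
          then obtain v w where vw: "v \<in> C" "w \<in> C" "y = emb2 v" "z = emb2 w" using B by blast
          have "(v,w) \<in> rel n Lb" by (rule mk_block_rel[OF C(1) vw(1,2)])
          hence "v \<in> carrierX n" "w \<in> carrierX n" "v = w \<or> (Lb v \<noteq> None \<and> Lb w = Lb v)"
            unfolding rel_def by auto
          thus ?thesis using vw K2[of v w] by auto
        qed
        thus ?case using step by simp
      qed
      thus "pq \<in> {(p,q). K p = K q}" using pq by simp
    qed
  qed
  have nosing: "(\<not> (\<exists>w. (embo u, w) \<in> ?js \<and> w \<in> singleton_pts (mk n La) (mk n Lb)))
     \<longleftrightarrow> condK n La Lb K (K (embo u))" for u
  proof -
    have "(\<exists>w. (embo u, w) \<in> ?js \<and> w \<in> singleton_pts (mk n La) (mk n Lb)) \<longleftrightarrow>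
      (\<exists>w. K (embo u) = K w \<and> ((\<exists>u\<in>carrierX n. La u = None \<and> w = emb1 u) \<or> (\<exists>u\<in>carrierX n. Lb u = None \<and> w = emb2 u)))"
      unfolding js singleton_pts_mk[OF wfa wfb] by simp
    also have "\<dots> \<longleftrightarrow> \<not> condK n La Lb K (K (embo u))"
      unfolding condK_def by (auto simp del: split_paired_Ex split_paired_All) (metis)+
    finally show ?thesis by blast
  qed
  have "star_rel n (mk n La) (mk n Lb) = rel n (GLc n La Lb K)"
    unfolding star_rel_def rel_def nosing GLc_def
    by (auto simp: js split: if_splits)
  thus ?thesis unfolding star_def mk_def by simp
qed



lemma js_equiv: "equiv UNIV (joint_sim a b)"
proof -
  have s: "sym (\<Union>B\<in>joint_blocks a b. B \<times> B)" by (rule symI) blast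
  show ?thesis unfolding joint_sim_def
    by (rule equivI) (auto intro: refl_rtrancl sym_rtrancl[OF s] trans_rtrancl)
qed

lemma js_refl: "(p, p) \<in> joint_sim a b" by (simp add: joint_sim_def)
lemma js_sym: "(p, q) \<in> joint_sim a b \<Longrightarrow> (q, p) \<in> joint_sim a b"
  using js_equiv[of a b] by (meson equivE symD)
lemma js_trans: "(p, q) \<in> joint_sim a b \<Longrightarrow> (q, r) \<in> joint_sim a b \<Longrightarrow> (p, r) \<in> joint_sim a b"
  using js_equiv[of a b] by (meson equivE transD)

lemma block_js1:
  assumes "u \<in> carrierX n" "v \<in> carrierX n" "La u \<noteq> None" "La v = La u"
  shows "(emb1 u, emb1 v) \<in> joint_sim (mk n La) (mk n Lb)"
proof -
  let ?C = "rel n La `` {u}"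
  have C: "?C \<in> mk n La" by (rule mk_class_in[OF assms(1)])
  have uv: "u \<in> ?C" "v \<in> ?C" using assms by (auto simp: rel_class)
  have "emb1 ` ?C \<in> joint_blocks (mk n La) (mk n Lb)" using C unfolding joint_blocks_def by blast
  moreover have "(emb1 u, emb1 v) \<in> emb1 ` ?C \<times> emb1 ` ?C" using uv by blast
  ultimately show ?thesis unfolding joint_sim_def by blast
qed

lemma block_js2:
  assumes "u \<in> carrierX n" "v \<in> carrierX n" "Lb u \<noteq> None" "Lb v = Lb u"
  shows "(emb2 u, emb2 v) \<in> joint_sim (mk n La) (mk n Lb)"
proof -
  let ?C = "rel n Lb `` {u}"
  have C: "?C \<in> mk n Lb" by (rule mk_class_in[OF assms(1)])
  have uv: "u \<in> ?C" "v \<in> ?C" using assms by (auto simp: rel_class)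
  have "emb2 ` ?C \<in> joint_blocks (mk n La) (mk n Lb)" using C unfolding joint_blocks_def by blast
  moreover have "(emb2 u, emb2 v) \<in> emb2 ` ?C \<times> emb2 ` ?C" using uv by blast
  ultimately show ?thesis unfolding joint_sim_def by blast
qed

definition Kc :: "bpart \<Rightarrow> bpart \<Rightarrow> nat \<times> nat \<Rightarrow> (nat \<times> nat) set" where
  "Kc a b p = joint_sim a b `` {p}"

lemma Kc_eq: "Kc a b p = Kc a b q \<longleftrightarrow> (p, q) \<in> joint_sim a b"
  unfolding Kc_def using equiv_class_eq_iff[OF js_equiv] by simp

lemma star_canon:
  assumes wfa: "wfL n La" and wfb: "wfL n Lb"
  shows "star n (mk n La) (mk n Lb) = mk n (GLc n La Lb (Kc (mk n La) (mk n Lb)))"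
  by (rule GEN[OF wfa wfb]) (auto simp: Kc_eq intro: block_js1 block_js2)

lemma GLc_cong: "K (embo u) = K (embo v) \<Longrightarrow> GLc n La Lb K u = GLc n La Lb K v"
  unfolding GLc_def by simp

lemma star_PIstar:
  assumes "a \<in> PIstar n" "b \<in> PIstar n"
  shows "star n a b \<in> PIstar n"
proof -
  obtain La :: "pt \<Rightarrow> pt set option" where La: "wfL n La" "a = mk n La" using PIstar_mk[OF assms(1)] by blast
  obtain Lb :: "pt \<Rightarrow> pt set option" where Lb: "wfL n Lb" "b = mk n Lb" using PIstar_mk[OF assms(2)] by blast
  let ?K = "Kc (mk n La) (mk n Lb)"
  let ?L = "GLc n La Lb ?K"
  have "wfL n ?L"
    unfolding wfL_def
  proof (intro ballI impI)
    fix u assume u: "u \<in> carrierX n" and ne: "?L u \<noteq> None"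
    hence cnd: "condK n La Lb ?K (?K (embo u))" unfolding GLc_def by (simp split: if_splits)
    hence cA: "\<And>u'. u' \<in> carrierX n \<Longrightarrow> La u' = None \<Longrightarrow> ?K (emb1 u') \<noteq> ?K (embo u)"
      and cB: "\<And>u'. u' \<in> carrierX n \<Longrightarrow> Lb u' = None \<Longrightarrow> ?K (emb2 u') \<noteq> ?K (embo u)"
      unfolding condK_def by blast+
    show "(\<exists>x\<in>{1..n}. ?L (Inl x) = ?L u) \<and> (\<exists>y\<in>{1..n}. ?L (Inr y) = ?L u)"
    proof (cases u)
      case (Inl x0)
      have x0: "x0 \<in> {1..n}" using u Inl by simp
      have "La (Inl x0) \<noteq> None" using cA[of "Inl x0"] x0 Inl by auto
      then obtain y1 where y1: "y1 \<in> {1..n}" "La (Inr y1) = La (Inl x0)" using La(1) x0 unfolding wfL_def by (metis carrier_Inl)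
      have k1: "?K (x0,0) = ?K (y1,1)"
      proof -
        have "(emb1 (Inl x0), emb1 (Inr y1)) \<in> joint_sim (mk n La) (mk n Lb)"
          by (rule block_js1) (use y1 x0 \<open>La (Inl x0) \<noteq> None\<close> in auto)
        thus ?thesis by (simp only: Kc_eq emb1.simps)
      qed
      have "Lb (Inl y1) \<noteq> None"
      proof
        assume "Lb (Inl y1) = None"
        hence "?K (emb2 (Inl y1)) \<noteq> ?K (embo u)" using cB[of "Inl y1"] y1 by simp
        thus False using k1 Inl by simp
      qed
      then obtain y2 where y2: "y2 \<in> {1..n}" "Lb (Inr y2) = Lb (Inl y1)" using Lb(1) y1 unfolding wfL_def by (metis carrier_Inl)
      have k2: "?K (y1,1) = ?K (y2,2)"
      proof -
        have "(emb2 (Inl y1), emb2 (Inr y2)) \<in> joint_sim (mk n La) (mk n Lb)"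
          by (rule block_js2) (use y1 y2 \<open>Lb (Inl y1) \<noteq> None\<close> in auto)
        thus ?thesis by (simp only: Kc_eq emb2.simps)
      qed
      have "?L (Inr y2) = ?L u" by (rule GLc_cong) (metis Inl embo.simps k1 k2)
      thus ?thesis using x0 y2 Inl by blast
    next
      case (Inr y0)
      have y0: "y0 \<in> {1..n}" using u Inr by simp
      have "Lb (Inr y0) \<noteq> None" using cB[of "Inr y0"] y0 Inr by auto
      then obtain x1 where x1: "x1 \<in> {1..n}" "Lb (Inl x1) = Lb (Inr y0)" using Lb(1) y0 unfolding wfL_def by (metis carrier_Inr)
      have k1: "?K (y0,2) = ?K (x1,1)"
      proof -
        have "(emb2 (Inr y0), emb2 (Inl x1)) \<in> joint_sim (mk n La) (mk n Lb)"
          by (rule block_js2) (use y0 x1 \<open>Lb (Inr y0) \<noteq> None\<close> in auto)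
        thus ?thesis by (simp only: Kc_eq emb2.simps)
      qed
      have "La (Inr x1) \<noteq> None"
      proof
        assume "La (Inr x1) = None"
        hence "?K (emb1 (Inr x1)) \<noteq> ?K (embo u)" using cA[of "Inr x1"] x1 by simp
        thus False using k1 Inr by simp
      qed
      then obtain x2 where x2: "x2 \<in> {1..n}" "La (Inl x2) = La (Inr x1)" using La(1) x1 unfolding wfL_def by (metis carrier_Inr)
      have k2: "?K (x1,1) = ?K (x2,0)"
      proof -
        have "(emb1 (Inr x1), emb1 (Inl x2)) \<in> joint_sim (mk n La) (mk n Lb)"
          by (rule block_js1) (use x1 x2 \<open>La (Inr x1) \<noteq> None\<close> in auto)
        thus ?thesis by (simp only: Kc_eq emb1.simps)
      qed
      have "?L (Inl x2) = ?L u" by (rule GLc_cong) (metis Inr embo.simps k1 k2)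
      thus ?thesis using y0 x2 Inr by blast
    qed
  qed
  thus ?thesis using star_canon[OF La(1) Lb(1)] La(2) Lb(2) mk_PIstar by simp
qed



fun sg :: "nat \<times> nat \<Rightarrow> nat \<times> nat" where
  "sg (x, k) = (x, if k \<le> 2 then 2 - k else k)"

lemma sg_sg[simp]: "sg (sg p) = p" by (cases p) auto
lemma sg_emb1[simp]: "sg (emb1 u) = emb2 (swp u)" by (cases u) auto
lemma sg_emb2[simp]: "sg (emb2 u) = emb1 (swp u)" by (cases u) auto
lemma sg_embo[simp]: "sg (embo u) = embo (swp u)" by (cases u) auto
lemma swp_swp[simp]: "swp (swp u) = u" by (cases u) auto
lemma swp_carrier[simp]: "swp u \<in> carrierX n \<longleftrightarrow> u \<in> carrierX n" by (cases u) auto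

lemma ball_swp: "(\<forall>u\<in>carrierX n. P (swp u)) \<longleftrightarrow> (\<forall>w\<in>carrierX n. P w)"
  by (metis swp_carrier swp_swp)

lemma swp_swp_img[simp]: "swp ` swp ` X = X" by (simp add: image_image)

lemma flipP_flipP[simp]: "flipP (flipP P) = P"
  unfolding flipP_def by (simp add: image_image)

lemma js_transport:
  assumes "(p, q) \<in> joint_sim a b"
  shows "(sg p, sg q) \<in> joint_sim (flipP b) (flipP a)"
  using assms unfolding joint_sim_def
proof (induction rule: rtrancl_induct)
  case base thus ?case by simp
next
  case (step y z)
  then obtain B where B: "B \<in> joint_blocks a b" "y \<in> B" "z \<in> B" by blast
  have "sg ` B \<in> joint_blocks (flipP b) (flipP a)"
  proof (cases "B \<in> (image emb1) ` a")
    case True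
    then obtain C where C: "C \<in> a" "B = emb1 ` C" by blast
    have "sg ` B = emb2 ` (swp ` C)" using C by (auto simp: image_comp comp_def image_iff)
    moreover have "swp ` C \<in> flipP a" using C by (simp add: flipP_def)
    ultimately show ?thesis unfolding joint_blocks_def by blast
  next
    case False
    then obtain C where C: "C \<in> b" "B = emb2 ` C" using B unfolding joint_blocks_def by blast
    have "sg ` B = emb1 ` (swp ` C)" using C by (auto simp: image_comp comp_def image_iff)
    moreover have "swp ` C \<in> flipP b" using C by (simp add: flipP_def)
    ultimately show ?thesis unfolding joint_blocks_def by blast
  qed
  moreover have "(sg y, sg z) \<in> sg ` B \<times> sg ` B" using B by blast
  ultimately have "(sg y, sg z) \<in> (\<Union>B\<in>joint_blocks (flipP b) (flipP a). B \<times> B)" by blast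
  thus ?case using step.IH by (rule rtrancl_into_rtrancl[rotated])
qed

lemma rel_swp_class: "u \<in> carrierX n \<Longrightarrow> rel n (L \<circ> swp) `` {u} = swp ` (rel n L `` {swp u})"
proof -
  assume u: "u \<in> carrierX n"
  have su: "swp u \<in> carrierX n" using u by simp
  show ?thesis
  proof (cases "L (swp u) = None")
    case True thus ?thesis using u su by (simp add: rel_class)
  next
    case False
    have "{v \<in> carrierX n. L (swp v) = L (swp u)} = swp ` {v \<in> carrierX n. L v = L (swp u)}"
      by (auto simp: image_iff) (metis swp_carrier swp_swp)
    moreover have "rel n (L \<circ> swp) `` {u} = {v \<in> carrierX n. L (swp v) = L (swp u)}"
      using rel_class[OF u, of "L \<circ> swp"] False by simp
    moreover have "rel n L `` {swp u} = {v \<in> carrierX n. L v = L (swp u)}"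
      using rel_class[OF su, of L] False by simp
    ultimately show ?thesis by simp
  qed
qed

lemma flip_mk: "flipP (mk n L) = mk n (L \<circ> swp)"
proof -
  have "flipP (mk n L) = (\<lambda>u. swp ` (rel n L `` {u})) ` carrierX n"
    unfolding flipP_def mk_eq by (simp add: image_comp comp_def)
  also have "\<dots> = (\<lambda>u. swp ` (rel n L `` {swp u})) ` carrierX n"
    by (auto simp: image_iff) (metis swp_carrier swp_swp)+
  also have "\<dots> = mk n (L \<circ> swp)"
    unfolding mk_eq by (rule image_cong[OF refl]) (simp add: rel_swp_class)
  finally show ?thesis .
qed

lemma wf_swp: "wfL n L \<Longrightarrow> wfL n (L \<circ> swp)"
  unfolding wfL_def
proof (intro ballI impI)
  fix u assume A: "\<forall>u\<in>carrierX n. L u \<noteq> None \<longrightarrow> (\<exists>x\<in>{1..n}. L (Inl x) = L u) \<and> (\<exists>y\<in>{1..n}. L (Inr y) = L u)"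
    and u: "u \<in> carrierX n" "(L \<circ> swp) u \<noteq> None"
  then have "(\<exists>x\<in>{1..n}. L (Inl x) = L (swp u)) \<and> (\<exists>y\<in>{1..n}. L (Inr y) = L (swp u))"
    by simp
  thus "(\<exists>x\<in>{1..n}. (L \<circ> swp) (Inl x) = (L \<circ> swp) u) \<and> (\<exists>y\<in>{1..n}. (L \<circ> swp) (Inr y) = (L \<circ> swp) u)"
    by auto
qed

lemma star_flip:
  assumes "a \<in> PIstar n" "b \<in> PIstar n"
  shows "star n (flipP b) (flipP a) = flipP (star n a b)"
proof -
  obtain La :: "pt \<Rightarrow> pt set option" where La: "wfL n La" "a = mk n La" using PIstar_mk[OF assms(1)] by blast
  obtain Lb :: "pt \<Rightarrow> pt set option" where Lb: "wfL n Lb" "b = mk n Lb" using PIstar_mk[OF assms(2)] by blast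
  let ?K = "Kc (mk n La) (mk n Lb)"
  have fb: "flipP b = mk n (Lb \<circ> swp)" and fa: "flipP a = mk n (La \<circ> swp)" using La Lb flip_mk by auto
  have "star n (mk n (Lb \<circ> swp)) (mk n (La \<circ> swp)) = mk n (GLc n (Lb \<circ> swp) (La \<circ> swp) (?K \<circ> sg))"
  proof (rule GEN[OF wf_swp[OF Lb(1)] wf_swp[OF La(1)]])
    fix u v assume "u \<in> carrierX n" "v \<in> carrierX n" "(Lb \<circ> swp) u \<noteq> None" "(Lb \<circ> swp) v = (Lb \<circ> swp) u"
    hence "(emb2 (swp u), emb2 (swp v)) \<in> joint_sim (mk n La) (mk n Lb)"
      by (intro block_js2) auto
    thus "(?K \<circ> sg) (emb1 u) = (?K \<circ> sg) (emb1 v)" by (simp add: Kc_eq)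
  next
    fix u v assume "u \<in> carrierX n" "v \<in> carrierX n" "(La \<circ> swp) u \<noteq> None" "(La \<circ> swp) v = (La \<circ> swp) u"
    hence "(emb1 (swp u), emb1 (swp v)) \<in> joint_sim (mk n La) (mk n Lb)"
      by (intro block_js1) auto
    thus "(?K \<circ> sg) (emb2 u) = (?K \<circ> sg) (emb2 v)" by (simp add: Kc_eq)
  next
    fix p q assume "(?K \<circ> sg) p = (?K \<circ> sg) q"
    hence "(sg p, sg q) \<in> joint_sim (mk n La) (mk n Lb)" by (simp add: Kc_eq)
    hence "(sg (sg p), sg (sg q)) \<in> joint_sim (flipP (mk n Lb)) (flipP (mk n La))" by (rule js_transport)
    thus "(p, q) \<in> joint_sim (mk n (Lb \<circ> swp)) (mk n (La \<circ> swp))" by (simp add: flip_mk)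
  qed
  also have "\<dots> = mk n (GLc n La Lb ?K \<circ> swp)"
  proof (rule mk_cong[where h = id])
    fix u assume "u \<in> carrierX n"
    have "condK n (Lb \<circ> swp) (La \<circ> swp) (?K \<circ> sg) k = condK n La Lb ?K k" for k
    proof -
      have "condK n (Lb \<circ> swp) (La \<circ> swp) (?K \<circ> sg) k \<longleftrightarrow>
        (\<forall>u'\<in>carrierX n. Lb (swp u') = None \<longrightarrow> ?K (emb2 (swp u')) \<noteq> k) \<and>
        (\<forall>u'\<in>carrierX n. La (swp u') = None \<longrightarrow> ?K (emb1 (swp u')) \<noteq> k)"
        unfolding condK_def by simp
      also have "\<dots> \<longleftrightarrow> condK n La Lb ?K k"
        unfolding condK_def ball_swp[where P = "\<lambda>w. Lb w = None \<longrightarrow> ?K (emb2 w) \<noteq> k"]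
          ball_swp[where P = "\<lambda>w. La w = None \<longrightarrow> ?K (emb1 w) \<noteq> k"] by blast
      finally show ?thesis .
    qed
    thus "GLc n (Lb \<circ> swp) (La \<circ> swp) (?K \<circ> sg) u = map_option id ((GLc n La Lb ?K \<circ> swp) u)"
      unfolding GLc_def by (simp add: option.map_id)
  qed simp
  also have "\<dots> = flipP (star n a b)"
    using star_canon[OF La(1) Lb(1)] La(2) Lb(2) by (simp add: flip_mk)
  finally show ?thesis using fa fb by simp
qed



definition Fl :: "nat set \<Rightarrow> (nat \<Rightarrow> nat) \<Rightarrow> pt \<Rightarrow> nat option" where
  "Fl D f u = (case u of Inl x \<Rightarrow> if x \<in> D then Some (f x) else None
                       | Inr y \<Rightarrow> if y \<in> f ` D then Some y else None)"

lemma Fl_Inl[simp]: "Fl D f (Inl x) = (if x \<in> D then Some (f x) else None)"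
  by (simp add: Fl_def)
lemma Fl_Inr[simp]: "Fl D f (Inr y) = (if y \<in> f ` D then Some y else None)"
  by (simp add: Fl_def)

lemma wf_Fl:
  assumes "D \<subseteq> {1..n}" "f ` D \<subseteq> {1..n}"
  shows "wfL n (Fl D f)"
  unfolding wfL_def
proof (intro ballI impI)
  fix u assume u: "u \<in> carrierX n" "Fl D f u \<noteq> None"
  show "(\<exists>x\<in>{1..n}. Fl D f (Inl x) = Fl D f u) \<and> (\<exists>y\<in>{1..n}. Fl D f (Inr y) = Fl D f u)"
  proof (cases u)
    case (Inl x)
    then have x: "x \<in> D" using u by (auto split: if_splits)
    then have "f x \<in> {1..n}" "x \<in> {1..n}" using assms by auto
    thus ?thesis using x Inl by auto
  next
    case (Inr y)
    then obtain x where x: "x \<in> D" "y = f x" using u by (auto split: if_splits)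
    then have "f x \<in> {1..n}" "x \<in> {1..n}" using assms by auto
    thus ?thesis using x Inr by auto
  qed
qed

definition goodP :: "nat \<Rightarrow> nat set \<Rightarrow> (nat \<Rightarrow> nat) \<Rightarrow> (pt \<Rightarrow> 'c option) \<Rightarrow> 'c option \<Rightarrow> bool" where
  "goodP n D f Lb l \<longleftrightarrow> l \<noteq> None \<and> (\<forall>y\<in>{1..n}. Lb (Inl y) = l \<longrightarrow> y \<in> f ` D)"

definition Pl :: "nat \<Rightarrow> nat set \<Rightarrow> (nat \<Rightarrow> nat) \<Rightarrow> (pt \<Rightarrow> 'c option) \<Rightarrow> pt \<Rightarrow> 'c option" where
  "Pl n D f Lb u = (case u of
      Inl x \<Rightarrow> if x \<in> D \<and> goodP n D f Lb (Lb (Inl (f x))) then Lb (Inl (f x)) else None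
    | Inr y \<Rightarrow> if goodP n D f Lb (Lb (Inr y)) then Lb (Inr y) else None)"

definition Km :: "(pt \<Rightarrow> 'c option) \<Rightarrow> nat \<Rightarrow> 'c + nat \<times> nat" where
  "Km Lb y = (case Lb (Inl y) of Some l \<Rightarrow> Inl l | None \<Rightarrow> Inr (y, 1))"

definition KP :: "nat \<Rightarrow> nat set \<Rightarrow> (nat \<Rightarrow> nat) \<Rightarrow> (pt \<Rightarrow> 'c option) \<Rightarrow> nat \<times> nat \<Rightarrow> 'c + nat \<times> nat" where
  "KP n D f Lb p = (let x = fst p; k = snd p in
     if x \<in> {1..n} \<and> k = 0 \<and> x \<in> D then Km Lb (f x)
     else if x \<in> {1..n} \<and> k = 1 then Km Lb x
     else if x \<in> {1..n} \<and> k = 2 then (case Lb (Inr x) of Some l \<Rightarrow> Inl l | None \<Rightarrow> Inr (x, 2))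
     else Inr (x, k))"

lemma KP_0: "KP n D f Lb (x, 0) = (if x \<in> {1..n} \<and> x \<in> D then Km Lb (f x) else Inr (x, 0))"
  by (simp add: KP_def)
lemma KP_1: "KP n D f Lb (x, Suc 0) = (if x \<in> {1..n} then Km Lb x else Inr (x, 1))"
  by (simp add: KP_def)
lemma KP_2: "KP n D f Lb (x, 2) = (if x \<in> {1..n} then (case Lb (Inr x) of Some l \<Rightarrow> Inl l | None \<Rightarrow> Inr (x, 2)) else Inr (x, 2))"
  by (simp add: KP_def)

lemma pull:
  assumes D: "D \<subseteq> {1..n}" "f ` D \<subseteq> {1..n}" and wfb: "wfL n Lb"
  shows "star n (mk n (Fl D f)) (mk n Lb) = mk n (Pl n D f Lb)"
proof -
  let ?K = "KP n D f Lb"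
  let ?js = "joint_sim (mk n (Fl D f)) (mk n Lb)"
  have wfa: "wfL n (Fl D f)" by (rule wf_Fl[OF D])
  have E: "equiv UNIV ?js" by (rule js_equiv)
  have e1: "?K (emb1 u) = Km Lb (the (Fl D f u))" if "u \<in> carrierX n" "Fl D f u \<noteq> None" for u
    using that D by (cases u) (auto simp: KP_0 KP_1 split: if_splits)
  have e2: "?K (emb2 u) = Inl (the (Lb u))" if "u \<in> carrierX n" "Lb u \<noteq> None" for u
    using that by (cases u) (auto simp: KP_1 KP_2 Km_def)
  define A where "A p = (if snd p = 0 \<and> fst p \<in> D then (f (fst p), 1::nat) else p)" for p
  have A1: "(p, A p) \<in> ?js \<and> ?K (A p) = ?K p" for p
  proof (cases "snd p = 0 \<and> fst p \<in> D")
    case True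
    then obtain x where p: "p = (x, 0)" "x \<in> D" by (cases p) auto
    have xn: "x \<in> {1..n}" "f x \<in> {1..n}" using p D by auto
    have "(emb1 (Inl x), emb1 (Inr (f x))) \<in> ?js"
      by (rule block_js1) (use xn p in auto)
    thus ?thesis using p xn by (simp add: A_def KP_0 KP_1)
  next
    case False
    hence "A p = p" unfolding A_def by (simp only: if_False)
    thus ?thesis by (simp add: js_refl)
  qed
  have shape: "(\<exists>u\<in>carrierX n. Lb u \<noteq> None \<and> p' = emb2 u \<and> ?K p' = Inl (the (Lb u))) \<or> ?K p' = Inr p'"
    if np: "\<not> (snd p' = 0 \<and> fst p' \<in> D)" for p'
  proof -
    obtain x k where p': "p' = (x, k)" by (cases p')
    show ?thesis
    proof (cases "x \<in> {1..n} \<and> (k = 1 \<or> k = 2)")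
      case True
      then consider "k = 1" | "k = 2" by blast
      thus ?thesis
      proof cases
        case 1
        show ?thesis
        proof (cases "Lb (Inl x)")
          case None thus ?thesis using p' 1 True by (simp add: KP_1 Km_def)
        next
          case (Some l)
          hence "Inl x \<in> carrierX n \<and> Lb (Inl x) \<noteq> None \<and> p' = emb2 (Inl x) \<and> ?K p' = Inl (the (Lb (Inl x)))"
            using p' 1 True by (simp add: KP_1 Km_def)
          thus ?thesis by blast
        qed
      next
        case 2
        show ?thesis
        proof (cases "Lb (Inr x)")
          case None thus ?thesis using p' 2 True by (simp add: KP_2)
        next
          case (Some l)
          hence "Inr x \<in> carrierX n \<and> Lb (Inr x) \<noteq> None \<and> p' = emb2 (Inr x) \<and> ?K p' = Inl (the (Lb (Inr x)))"
            using p' 2 True by (simp add: KP_2)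
          thus ?thesis by blast
        qed
      qed
    next
      case False
      thus ?thesis using p' np by (auto simp: KP_def Let_def)
    qed
  qed
  have B2: "(p1, p2) \<in> ?js" if n1: "\<not> (snd p1 = 0 \<and> fst p1 \<in> D)" and n2: "\<not> (snd p2 = 0 \<and> fst p2 \<in> D)"
     and eq: "?K p1 = ?K p2" for p1 p2
  proof (cases "?K p1")
    case (Inl l)
    have "?K p1 \<noteq> Inr p1" using Inl by simp
    then obtain u where u: "u \<in> carrierX n" "Lb u \<noteq> None" "p1 = emb2 u" "?K p1 = Inl (the (Lb u))"
      using shape[OF n1] by blast
    have "?K p2 \<noteq> Inr p2" using Inl eq by simp
    then obtain v where v: "v \<in> carrierX n" "Lb v \<noteq> None" "p2 = emb2 v" "?K p2 = Inl (the (Lb v))"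
      using shape[OF n2] by blast
    have "the (Lb v) = the (Lb u)" using u(4) v(4) eq by simp
    hence "Lb v = Lb u" using u(2) v(2) by auto
    hence "(emb2 u, emb2 v) \<in> ?js" by (intro block_js2) (use u v in auto)
    thus ?thesis using u v by simp
  next
    case (Inr r)
    have "\<not> (\<exists>u\<in>carrierX n. Lb u \<noteq> None \<and> p1 = emb2 u \<and> ?K p1 = Inl (the (Lb u)))" using Inr by auto
    hence "?K p1 = Inr p1" using shape[OF n1] by blast
    have "\<not> (\<exists>u\<in>carrierX n. Lb u \<noteq> None \<and> p2 = emb2 u \<and> ?K p2 = Inl (the (Lb u)))" using Inr eq by auto
    hence "?K p2 = Inr p2" using shape[OF n2] by blast
    hence "p1 = p2" using \<open>?K p1 = Inr p1\<close> eq by simp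
    thus ?thesis using js_refl by simp
  qed
  have nA: "\<not> (snd (A p) = 0 \<and> fst (A p) \<in> D)" for p
    by (simp add: A_def)
  have A2: "(A p, A q) \<in> ?js" if "?K (A p) = ?K (A q)" for p q
    by (rule B2[OF nA nA that])
  have K3: "(p, q) \<in> ?js" if "?K p = ?K q" for p q
  proof -
    have "(p, A p) \<in> ?js" using A1[of p] by blast
    moreover have "(A q, q) \<in> ?js" using A1[of q] by (blast intro: js_sym)
    moreover have "?K (A p) = ?K (A q)" using A1[of p] A1[of q] that by simp
    hence "(A p, A q) \<in> ?js" by (rule A2)
    ultimately show ?thesis by (blast intro: js_trans)
  qed
  have st: "star n (mk n (Fl D f)) (mk n Lb) = mk n (GLc n (Fl D f) Lb ?K)"
  proof (rule GEN[OF wfa wfb])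
    fix u v assume "u \<in> carrierX n" "v \<in> carrierX n" "Fl D f u \<noteq> None" "Fl D f v = Fl D f u"
    thus "?K (emb1 u) = ?K (emb1 v)" using e1[of u] e1[of v] by simp
  next
    fix u v assume "u \<in> carrierX n" "v \<in> carrierX n" "Lb u \<noteq> None" "Lb v = Lb u"
    thus "?K (emb2 u) = ?K (emb2 v)" using e2[of u] e2[of v] by simp
  qed (rule K3)
  have cInl: "condK n (Fl D f) Lb ?K (Inl l) \<longleftrightarrow> goodP n D f Lb (Some l)" for l
  proof -
    have c1: "(\<forall>u'\<in>carrierX n. Fl D f u' = None \<longrightarrow> ?K (emb1 u') \<noteq> Inl l) \<longleftrightarrow>
        (\<forall>y\<in>{1..n}. Lb (Inl y) = Some l \<longrightarrow> y \<in> f ` D)"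
    proof
      assume h: "\<forall>u'\<in>carrierX n. Fl D f u' = None \<longrightarrow> ?K (emb1 u') \<noteq> Inl l"
      show "\<forall>y\<in>{1..n}. Lb (Inl y) = Some l \<longrightarrow> y \<in> f ` D"
      proof (intro ballI impI)
        fix y assume y: "y \<in> {1..n}" "Lb (Inl y) = Some l"
        show "y \<in> f ` D"
        proof (rule ccontr)
          assume "y \<notin> f ` D"
          hence "Fl D f (Inr y) = None" by simp
          hence "?K (emb1 (Inr y)) \<noteq> Inl l" using h y(1) carrier_Inr by blast
          thus False using y by (simp add: KP_1 Km_def)
        qed
      qed
    next
      assume h: "\<forall>y\<in>{1..n}. Lb (Inl y) = Some l \<longrightarrow> y \<in> f ` D"
      show "\<forall>u'\<in>carrierX n. Fl D f u' = None \<longrightarrow> ?K (emb1 u') \<noteq> Inl l"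
      proof (intro ballI impI)
        fix u' assume u': "u' \<in> carrierX n" "Fl D f u' = None"
        show "?K (emb1 u') \<noteq> Inl l"
        proof (cases u')
          case (Inl x) thus ?thesis using u' by (auto simp: KP_0)
        next
          case (Inr y) thus ?thesis using u' h by (auto simp: KP_1 Km_def split: option.splits if_splits)
        qed
      qed
    qed
    have c2: "(\<forall>u'\<in>carrierX n. Lb u' = None \<longrightarrow> ?K (emb2 u') \<noteq> Inl l)"
    proof (intro ballI impI)
      fix u' assume u': "u' \<in> carrierX n" "Lb u' = None"
      thus "?K (emb2 u') \<noteq> Inl l" by (cases u') (auto simp: KP_1 KP_2 Km_def)
    qed
    show ?thesis unfolding condK_def goodP_def using c1 c2 by simp
  qed
  have "mk n (GLc n (Fl D f) Lb ?K) = mk n (Pl n D f Lb)"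
  proof (rule mk_cong[where h = Inl])
    fix u assume u: "u \<in> carrierX n"
    show "GLc n (Fl D f) Lb ?K u = map_option Inl (Pl n D f Lb u)"
    proof (cases u)
      case (Inl x)
      have xn: "x \<in> {1..n}" using u Inl by simp
      show ?thesis
      proof (cases "x \<in> D")
        case False
        have "Fl D f (Inl x) = None" using False by simp
        hence "\<not> condK n (Fl D f) Lb ?K (?K (embo u))"
          unfolding condK_def using u Inl by (metis emb1.simps(1) embo.simps(1))
        thus ?thesis using Inl False by (simp add: GLc_def Pl_def)
      next
        case True
        have fx: "f x \<in> {1..n}" using True D by auto
        show ?thesis
        proof (cases "Lb (Inl (f x))")
          case None
          have "?K (embo u) = ?K (emb2 (Inl (f x)))" using Inl True xn fx None by (simp add: KP_0 KP_1 Km_def)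
          hence "\<not> condK n (Fl D f) Lb ?K (?K (embo u))"
            unfolding condK_def using fx None by (metis carrier_Inl)
          thus ?thesis using Inl True None by (simp add: GLc_def Pl_def goodP_def)
        next
          case (Some l)
          have "?K (embo u) = Inl l" using Inl True xn Some by (simp add: KP_0 Km_def)
          thus ?thesis using Inl True Some cInl by (simp add: GLc_def Pl_def)
        qed
      qed
    next
      case (Inr y)
      have yn: "y \<in> {1..n}" using u Inr by simp
      show ?thesis
      proof (cases "Lb (Inr y)")
        case None
        have "?K (embo u) = ?K (emb2 (Inr y))" using Inr by simp
        hence "\<not> condK n (Fl D f) Lb ?K (?K (embo u))"
          unfolding condK_def using u Inr None by metis
        thus ?thesis using Inr None by (simp add: GLc_def Pl_def goodP_def)
      next
        case (Some l)
        have "?K (embo u) = Inl l" using Inr yn Some by (simp add: KP_2)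
        thus ?thesis using Inr Some cInl by (simp add: GLc_def Pl_def)
      qed
    qed
  qed simp
  thus ?thesis using st by simp
qed



definition FF :: "nat \<Rightarrow> nat set \<Rightarrow> (nat \<Rightarrow> nat) \<Rightarrow> bpart" where
  "FF n D f = mk n (Fl D f)"

lemma FF_cong: "(\<And>x. x \<in> D \<Longrightarrow> f x = g x) \<Longrightarrow> FF n D f = FF n D g"
  unfolding FF_def by (rule mk_cong[where h = id]) (auto simp: Fl_def option.map_id split: sum.splits)

lemma goodP_Fl:
  assumes "E \<subseteq> {1..n}"
  shows "goodP n D f (Fl E h) (Some z) \<longleftrightarrow> (\<forall>y\<in>E. h y = z \<longrightarrow> y \<in> f ` D)"
  using assms unfolding goodP_def by auto

lemma PF:
  assumes D: "D \<subseteq> {1..n}" "f ` D \<subseteq> {1..n}" and E: "E \<subseteq> {1..n}" "h ` E \<subseteq> {1..n}"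
  shows "star n (FF n D f) (FF n E h) = FF n {x \<in> D. f x \<in> E \<and> (\<forall>y\<in>E. h y = h (f x) \<longrightarrow> y \<in> f ` D)} (h \<circ> f)"
proof -
  let ?D' = "{x \<in> D. f x \<in> E \<and> (\<forall>y\<in>E. h y = h (f x) \<longrightarrow> y \<in> f ` D)}"
  have "star n (FF n D f) (FF n E h) = mk n (Pl n D f (Fl E h))"
    unfolding FF_def by (rule pull[OF D wf_Fl[OF E]])
  also have "\<dots> = FF n ?D' (h \<circ> f)"
    unfolding FF_def
  proof (rule mk_cong[where h = id])
    fix u assume u: "u \<in> carrierX n"
    show "Pl n D f (Fl E h) u = map_option id (Fl ?D' (h \<circ> f) u)"
    proof (cases u)
      case (Inl x)
      show ?thesis
      proof (cases "x \<in> D \<and> f x \<in> E")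
        case True
        thus ?thesis using Inl by (simp add: Pl_def goodP_Fl[OF E(1)] option.map_id)
      next
        case False
        thus ?thesis using Inl by (auto simp: Pl_def goodP_def option.map_id)
      qed
    next
      case (Inr z)
      have "z \<in> (h \<circ> f) ` ?D' \<longleftrightarrow> z \<in> h ` E \<and> (\<forall>y\<in>E. h y = z \<longrightarrow> y \<in> f ` D)"
      proof
        assume "z \<in> (h \<circ> f) ` ?D'"
        then obtain x where x: "x \<in> ?D'" "z = h (f x)" by auto
        thus "z \<in> h ` E \<and> (\<forall>y\<in>E. h y = z \<longrightarrow> y \<in> f ` D)" by auto
      next
        assume a: "z \<in> h ` E \<and> (\<forall>y\<in>E. h y = z \<longrightarrow> y \<in> f ` D)"
        then obtain y where y: "y \<in> E" "z = h y" by auto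
        then obtain x where x: "x \<in> D" "y = f x" using a by auto
        have "x \<in> ?D'" using x y a by auto
        thus "z \<in> (h \<circ> f) ` ?D'" using x y by auto
      qed
      thus ?thesis using Inr by (auto simp: Pl_def goodP_Fl[OF E(1)] option.map_id)
    qed
  qed simp
  finally show ?thesis .
qed

lemma unit_FF:
  assumes "bij_betw \<pi> {1..n} {1..n}"
  shows "(\<lambda>x. {Inl x, Inr (\<pi> x)}) ` {1..n} = FF n {1..n} \<pi>"
proof -
  have inj: "inj_on \<pi> {1..n}" and im: "\<pi> ` {1..n} = {1..n}" using assms by (auto simp: bij_betw_def)
  have S: "{v \<in> carrierX n. Fl {1..n} \<pi> v = Some (\<pi> x)} = {Inl x, Inr (\<pi> x)}" if x: "x \<in> {1..n}" for x
  proof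
    show "{v \<in> carrierX n. Fl {1..n} \<pi> v = Some (\<pi> x)} \<subseteq> {Inl x, Inr (\<pi> x)}"
    proof
      fix v assume v: "v \<in> {v \<in> carrierX n. Fl {1..n} \<pi> v = Some (\<pi> x)}"
      show "v \<in> {Inl x, Inr (\<pi> x)}"
      proof (cases v)
        case (Inl x')
        hence "x' \<in> {1..n}" "\<pi> x' = \<pi> x" using v by (simp_all split: if_splits)
        hence "x' = x" using inj x by (metis inj_onD)
        thus ?thesis using Inl by simp
      next
        case (Inr y)
        hence "y = \<pi> x" using v by (simp split: if_splits)
        thus ?thesis using Inr by simp
      qed
    qed
    have "\<pi> x \<in> {1..n}" using x im by blast
    thus "{Inl x, Inr (\<pi> x)} \<subseteq> {v \<in> carrierX n. Fl {1..n} \<pi> v = Some (\<pi> x)}"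
      using x im by simp
  qed
  have cl: "rel n (Fl {1..n} \<pi>) `` {Inl x} = {Inl x, Inr (\<pi> x)}" if x: "x \<in> {1..n}" for x
    using x S[OF x] by (simp add: rel_class)
  have cl2: "rel n (Fl {1..n} \<pi>) `` {Inr (\<pi> x)} = {Inl x, Inr (\<pi> x)}" if x: "x \<in> {1..n}" for x
  proof -
    have px: "\<pi> x \<in> {1..n}" using x im by blast
    hence "Fl {1..n} \<pi> (Inr (\<pi> x)) = Some (\<pi> x)" using im by simp
    thus ?thesis using px S[OF x] by (simp add: rel_class)
  qed
  show ?thesis
    unfolding FF_def mk_eq
  proof
    show "(\<lambda>x. {Inl x, Inr (\<pi> x)}) ` {1..n} \<subseteq> (\<lambda>u. rel n (Fl {1..n} \<pi>) `` {u}) ` carrierX n"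
    proof
      fix B assume "B \<in> (\<lambda>x. {Inl x, Inr (\<pi> x)}) ` {1..n}"
      then obtain x where x: "x \<in> {1..n}" "B = {Inl x, Inr (\<pi> x)}" by auto
      hence "B = rel n (Fl {1..n} \<pi>) `` {Inl x}" using cl by simp
      thus "B \<in> (\<lambda>u. rel n (Fl {1..n} \<pi>) `` {u}) ` carrierX n" using x by auto
    qed
    show "(\<lambda>u. rel n (Fl {1..n} \<pi>) `` {u}) ` carrierX n \<subseteq> (\<lambda>x. {Inl x, Inr (\<pi> x)}) ` {1..n}"
    proof
      fix B assume "B \<in> (\<lambda>u. rel n (Fl {1..n} \<pi>) `` {u}) ` carrierX n"
      then obtain u where u: "u \<in> carrierX n" "B = rel n (Fl {1..n} \<pi>) `` {u}" by auto
      show "B \<in> (\<lambda>x. {Inl x, Inr (\<pi> x)}) ` {1..n}"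
      proof (cases u)
        case (Inl x)
        hence "x \<in> {1..n}" using u by simp
        thus ?thesis using u Inl cl by auto
      next
        case (Inr y)
        have "y \<in> \<pi> ` {1..n}" using u Inr im by simp
        then obtain x where x: "x \<in> {1..n}" "y = \<pi> x" by blast
        thus ?thesis using u Inr cl2[OF x(1)] by auto
      qed
    qed
  qed
qed

definition c12 :: "nat \<Rightarrow> nat" where "c12 x = (if x = 2 then 1 else x)"

lemma gamma_FF:
  assumes n: "n \<ge> 3"
  shows "gamma12 n = FF n {1..n} c12"
proof -
  let ?L = "Fl {1..n} c12"
  have im: "y \<in> c12 ` {1..n} \<longleftrightarrow> y \<in> {1..n} \<and> y \<noteq> 2" for y
  proof
    assume "y \<in> c12 ` {1..n}" thus "y \<in> {1..n} \<and> y \<noteq> 2" by (auto simp: c12_def)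
  next
    assume "y \<in> {1..n} \<and> y \<noteq> 2" thus "y \<in> c12 ` {1..n}" by (intro image_eqI[of y _ y]) (auto simp: c12_def)
  qed
  have Lx: "?L (Inl x) = (if x \<in> {1..n} then Some (c12 x) else None)" for x by simp
  have Ly: "?L (Inr y) = (if y \<in> {1..n} \<and> y \<noteq> 2 then Some y else None)" for y using im by simp
  have S1: "{v \<in> carrierX n. ?L v = Some 1} = {Inl 1, Inl 2, Inr 1}"
  proof
    show "{v \<in> carrierX n. ?L v = Some 1} \<subseteq> {Inl 1, Inl 2, Inr 1}"
    proof
      fix v assume "v \<in> {v \<in> carrierX n. ?L v = Some 1}"
      thus "v \<in> {Inl 1, Inl 2, Inr 1}" by (cases v) (auto simp: Lx Ly c12_def split: if_splits)
    qed
    show "{Inl 1, Inl 2, Inr 1} \<subseteq> {v \<in> carrierX n. ?L v = Some 1}" using n by (auto simp: Lx Ly c12_def)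
  qed
  have St: "{v \<in> carrierX n. ?L v = Some t} = {Inl t, Inr t}" if t: "t \<in> {3..n}" for t
  proof
    show "{v \<in> carrierX n. ?L v = Some t} \<subseteq> {Inl t, Inr t}"
    proof
      fix v assume "v \<in> {v \<in> carrierX n. ?L v = Some t}"
      thus "v \<in> {Inl t, Inr t}" using t by (cases v) (auto simp: Lx Ly c12_def split: if_splits)
    qed
    show "{Inl t, Inr t} \<subseteq> {v \<in> carrierX n. ?L v = Some t}" using t by (auto simp: Lx Ly c12_def)
  qed
  have cls: "rel n ?L `` {u} \<in> gamma12 n" if u: "u \<in> carrierX n" for u
  proof (cases u)
    case (Inl x)
    hence x: "x \<in> {1..n}" using u by simp
    show ?thesis
    proof (cases "x \<le> 2")
      case True
      hence "?L u = Some 1" using Inl x by (auto simp: c12_def)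
      hence "rel n ?L `` {u} = {Inl 1, Inl 2, Inr 1}" using u S1 by (simp add: rel_class)
      thus ?thesis by (simp add: gamma12_def)
    next
      case False
      hence "?L u = Some x" using Inl x by (auto simp: c12_def)
      moreover have "x \<in> {3..n}" using False x by auto
      ultimately have "rel n ?L `` {u} = {Inl x, Inr x}" using u St by (simp add: rel_class)
      thus ?thesis using \<open>x \<in> {3..n}\<close> by (simp add: gamma12_def)
    qed
  next
    case (Inr y)
    hence y: "y \<in> {1..n}" using u by simp
    show ?thesis
    proof (cases "y = 2")
      case True
      have "?L u = None" using Inr True by (simp only: Ly) simp
      hence "rel n ?L `` {u} = {Inr 2}" using Inr u True by (simp add: rel_class)
      thus ?thesis by (simp add: gamma12_def)
    next
      case False
      show ?thesis
      proof (cases "y = 1")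
        case True
        have "?L (Inr y) = Some y" using y False by (simp only: Ly) simp
        hence "?L u = Some 1" using Inr True by simp
        hence "rel n ?L `` {u} = {Inl 1, Inl 2, Inr 1}" using u S1 by (simp add: rel_class)
        thus ?thesis by (simp add: gamma12_def)
      next
        case False2: False
        have y3: "y \<in> {3..n}" using y False False2 by auto
        have "?L (Inr y) = Some y" using y False by (simp only: Ly) simp
        hence "?L u = Some y" using Inr by simp
        hence "rel n ?L `` {u} = {Inl y, Inr y}" using u St[OF y3] by (simp add: rel_class)
        thus ?thesis using y3 by (simp add: gamma12_def)
      qed
    qed
  qed
  have hback: "B \<in> (\<lambda>u. rel n ?L `` {u}) ` carrierX n" if hB: "B \<in> gamma12 n" for B
  proof -
    have c1: "Inl 1 \<in> carrierX n" "Inr 2 \<in> carrierX n" using n by auto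
    have "B = {Inl 1, Inl 2, Inr 1} \<or> B = {Inr 2} \<or> (\<exists>t\<in>{3..n}. B = {Inl t, Inr t})"
      using hB by (auto simp: gamma12_def)
    moreover have "rel n ?L `` {Inl 1} = {Inl 1, Inl 2, Inr 1}"
      using S1 c1 by (simp add: rel_class c12_def)
    moreover have "rel n ?L `` {Inr 2} = {Inr 2}"
    proof -
      have "?L (Inr 2) = None" by (simp only: Ly) simp
      thus ?thesis using c1 by (simp add: rel_class)
    qed
    moreover have "rel n ?L `` {Inl t} = {Inl t, Inr t}" if t: "t \<in> {3..n}" for t
      using St[OF t] t by (simp add: rel_class c12_def)
    ultimately show ?thesis using c1
    proof -
      assume cs: "B = {Inl 1, Inl 2, Inr 1} \<or> B = {Inr 2} \<or> (\<exists>t\<in>{3..n}. B = {Inl t, Inr t})"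
        and e1: "rel n ?L `` {Inl 1} = {Inl 1, Inl 2, Inr 1}" and e2: "rel n ?L `` {Inr 2} = {Inr 2}"
        and e3: "\<And>t. t \<in> {3..n} \<Longrightarrow> rel n ?L `` {Inl t} = {Inl t, Inr t}"
      show ?thesis
      proof (rule disjE[OF cs])
        assume "B = {Inl 1, Inl 2, Inr 1}" thus ?thesis using e1 c1 by (metis image_eqI)
      next
        assume "B = {Inr 2} \<or> (\<exists>t\<in>{3..n}. B = {Inl t, Inr t})"
        thus ?thesis
        proof
          assume "B = {Inr 2}" thus ?thesis using e2 c1 by (metis image_eqI)
        next
          assume "\<exists>t\<in>{3..n}. B = {Inl t, Inr t}"
          then obtain t where t: "t \<in> {3..n}" "B = {Inl t, Inr t}" by blast
          have "Inl t \<in> carrierX n" using t by simp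
          thus ?thesis using e3[OF t(1)] t(2) by (metis image_eqI)
        qed
      qed
    qed
  qed
  show ?thesis unfolding FF_def mk_eq using cls hback by blast
qed

lemma gamma_inv_flip: "gamma12_inv n = flipP (gamma12 n)"
  unfolding gamma12_def gamma12_inv_def flipP_def by (simp add: image_image insert_commute)

lemma units_flip:
  assumes "P \<in> units n" shows "flipP P \<in> units n"
proof -
  obtain \<pi> where pi: "bij_betw \<pi> {1..n} {1..n}" "P = (\<lambda>x. {Inl x, Inr (\<pi> x)}) ` {1..n}"
    using assms by (auto simp: units_def)
  let ?\<rho> = "inv_into {1..n} \<pi>"
  have r: "bij_betw ?\<rho> {1..n} {1..n}" by (rule bij_betw_inv_into[OF pi(1)])
  have "flipP P = (\<lambda>x. {Inr x, Inl (\<pi> x)}) ` {1..n}"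
    unfolding pi(2) flipP_def by (simp add: image_image)
  also have "\<dots> = (\<lambda>y. {Inl y, Inr (?\<rho> y)}) ` {1..n}"
  proof -
    have "(\<lambda>x. {Inr x, Inl (\<pi> x)}) ` {1..n} = (\<lambda>y. {Inl y, Inr (?\<rho> y)}) ` (\<pi> ` {1..n})"
      unfolding image_image
    proof (rule image_cong[OF refl])
      fix x assume x: "x \<in> {1..n}"
      have "?\<rho> (\<pi> x) = x" by (rule inv_into_f_f[OF bij_betw_imp_inj_on[OF pi(1)] x])
      thus "{Inr x, Inl (\<pi> x)} = {Inl (\<pi> x), Inr (?\<rho> (\<pi> x))}" by (simp add: insert_commute)
    qed
    thus ?thesis using pi(1) by (simp add: bij_betw_def)
  qed
  finally have fe: "flipP P = (\<lambda>y. {Inl y, Inr (?\<rho> y)}) ` {1..n}" .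
  show ?thesis unfolding units_def mem_Collect_eq by (rule exI[of _ ?\<rho>]) (use r fe in simp)
qed



lemma c12_im: "n \<ge> 3 \<Longrightarrow> y \<in> c12 ` {1..n} \<longleftrightarrow> y \<in> {1..n} \<and> y \<noteq> 2"
proof
  assume "y \<in> c12 ` {1..n}" thus "y \<in> {1..n} \<and> y \<noteq> 2" by (auto simp: c12_def)
next
  assume "y \<in> {1..n} \<and> y \<noteq> 2" thus "y \<in> c12 ` {1..n}" by (intro image_eqI[of y _ y]) (auto simp: c12_def)
qed

definition KC :: "nat \<Rightarrow> nat \<times> nat \<Rightarrow> nat + nat \<times> nat" where
  "KC n p = (if fst p \<in> {1..n} \<and> snd p \<le> 2 \<and> \<not> (fst p = 2 \<and> snd p \<noteq> 1) then Inl (c12 (fst p)) else Inr p)"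

lemma C1:
  assumes n: "n \<ge> 3"
  shows "star n (gamma12_inv n) (gamma12 n) = FF n ({1..n} - {2}) id"
proof -
  let ?X = "{1..n::nat}"
  let ?La = "Fl ?X c12 \<circ> swp"
  let ?Lb = "Fl ?X c12"
  let ?K = "KC n"
  let ?js = "joint_sim (mk n ?La) (mk n ?Lb)"
  have ga: "gamma12_inv n = mk n ?La" and gb: "gamma12 n = mk n ?Lb"
    using gamma_FF[OF n] gamma_inv_flip[of n] flip_mk by (simp_all add: FF_def)
  have wfb: "wfL n ?Lb" by (rule wf_Fl) (auto simp: c12_def)
  have wfa: "wfL n ?La" by (rule wf_swp[OF wfb])
  have LaL: "?La (Inl x) = (if x \<in> ?X \<and> x \<noteq> 2 then Some x else None)" for x
    using c12_im[OF n] by simp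
  have LaR: "?La (Inr y) = (if y \<in> ?X then Some (c12 y) else None)" for y by simp
  have LbL: "?Lb (Inl y) = (if y \<in> ?X then Some (c12 y) else None)" for y by simp
  have LbR: "?Lb (Inr x) = (if x \<in> ?X \<and> x \<noteq> 2 then Some x else None)" for x
    using c12_im[OF n] by simp
  have e1: "?K (emb1 u) = Inl (the (?La u))" if "u \<in> carrierX n" "?La u \<noteq> None" for u
  proof (cases u)
    case (Inl x) thus ?thesis using that by (simp only: LaL) (auto simp: KC_def c12_def split: if_splits)
  next
    case (Inr y) thus ?thesis using that by (simp only: LaR) (auto simp: KC_def split: if_splits)
  qed
  have e2: "?K (emb2 u) = Inl (the (?Lb u))" if "u \<in> carrierX n" "?Lb u \<noteq> None" for u
  proof (cases u)
    case (Inl x) thus ?thesis using that by (simp only: LbL) (auto simp: KC_def split: if_splits)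
  next
    case (Inr y) thus ?thesis using that by (simp only: LbR) (auto simp: KC_def c12_def split: if_splits)
  qed
  have anc: "(p, (c12 (fst p), 1)) \<in> ?js" if v: "fst p \<in> ?X" "snd p \<le> 2" "\<not> (fst p = 2 \<and> snd p \<noteq> 1)" for p
  proof -
    obtain x k where p: "p = (x, k)" by (cases p)
    have x: "x \<in> ?X" using v p by simp
    have "k \<le> 2" using v p by simp
    then consider "k = 0" | "k = 1" | "k = 2" by linarith
    thus ?thesis
    proof cases
      case 1
      hence x2: "x \<noteq> 2" using v p by simp
      have "(emb1 (Inl x), emb1 (Inr x)) \<in> ?js"
        by (rule block_js1) (use x x2 in \<open>simp_all only: LaL LaR carrier_Inl carrier_Inr\<close>, auto simp: c12_def)
      thus ?thesis using p 1 x2 by (simp add: c12_def)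
    next
      case 2
      show ?thesis
      proof (cases "x = 2")
        case True
        have "(emb1 (Inr 2), emb1 (Inr 1)) \<in> ?js"
          by (rule block_js1) (use n in \<open>simp_all only: LaR carrier_Inr\<close>, auto simp: c12_def)
        thus ?thesis using p 2 True by (simp add: c12_def)
      next
        case False
        thus ?thesis using p 2 js_refl by (simp add: c12_def)
      qed
    next
      case 3
      hence x2: "x \<noteq> 2" using v p by simp
      have "(emb2 (Inr x), emb2 (Inl x)) \<in> ?js"
        by (rule block_js2) (use x x2 in \<open>simp_all only: LbL LbR carrier_Inl carrier_Inr\<close>, auto simp: c12_def)
      thus ?thesis using p 3 x2 by (simp add: c12_def)
    qed
  qed
  have K3: "(p, q) \<in> ?js" if eq: "?K p = ?K q" for p q
  proof (cases "fst p \<in> ?X \<and> snd p \<le> 2 \<and> \<not> (fst p = 2 \<and> snd p \<noteq> 1)")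
    case True
    hence Kp: "?K p = Inl (c12 (fst p))" by (simp add: KC_def)
    have vq: "fst q \<in> ?X \<and> snd q \<le> 2 \<and> \<not> (fst q = 2 \<and> snd q \<noteq> 1)"
      using eq Kp by (auto simp: KC_def split: if_splits)
    hence Kq: "?K q = Inl (c12 (fst q))" by (simp add: KC_def)
    have c: "c12 (fst p) = c12 (fst q)" using eq Kp Kq by simp
    have "(p, (c12 (fst p), 1)) \<in> ?js" using anc True by blast
    moreover have "(q, (c12 (fst p), 1)) \<in> ?js" using anc[of q] vq c by simp
    ultimately show ?thesis by (blast intro: js_trans js_sym)
  next
    case False
    hence Kp: "?K p = Inr p" by (simp add: KC_def)
    hence "?K q = Inr p" using eq by simp
    hence "q = p" by (auto simp: KC_def split: if_splits)
    thus ?thesis by (simp add: js_refl)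
  qed
  have st: "star n (mk n ?La) (mk n ?Lb) = mk n (GLc n ?La ?Lb ?K)"
  proof (rule GEN[OF wfa wfb])
    fix u v assume "u \<in> carrierX n" "v \<in> carrierX n" "?La u \<noteq> None" "?La v = ?La u"
    thus "?K (emb1 u) = ?K (emb1 v)" using e1[of u] e1[of v] by simp
  next
    fix u v assume "u \<in> carrierX n" "v \<in> carrierX n" "?Lb u \<noteq> None" "?Lb v = ?Lb u"
    thus "?K (emb2 u) = ?K (emb2 v)" using e2[of u] e2[of v] by simp
  qed (rule K3)
  have cInl: "condK n ?La ?Lb ?K (Inl l)" for l
    unfolding condK_def
  proof (intro conjI ballI impI)
    fix u' assume u': "u' \<in> carrierX n" "?La u' = None"
    show "?K (emb1 u') \<noteq> Inl l"
    proof (cases u')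
      case (Inl x)
      hence "x = 2" using u' by (simp only: LaL carrier_Inl) (auto split: if_splits)
      thus ?thesis using Inl by (simp add: KC_def)
    next
      case (Inr y) thus ?thesis using u' by simp
    qed
  next
    fix u' assume u': "u' \<in> carrierX n" "?Lb u' = None"
    show "?K (emb2 u') \<noteq> Inl l"
    proof (cases u')
      case (Inr x)
      hence "x = 2" using u' by (simp only: LbR carrier_Inr) (auto split: if_splits)
      thus ?thesis using Inr by (simp add: KC_def)
    next
      case (Inl y) thus ?thesis using u' by simp
    qed
  qed
  have "mk n (GLc n ?La ?Lb ?K) = FF n (?X - {2}) id"
    unfolding FF_def
  proof (rule mk_cong[where h = Inl])
    fix u assume u: "u \<in> carrierX n"
    show "GLc n ?La ?Lb ?K u = map_option Inl (Fl (?X - {2}) id u)"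
    proof (cases u)
      case (Inl x)
      have x: "x \<in> ?X" using u Inl by simp
      show ?thesis
      proof (cases "x = 2")
        case True
        have "?La (Inl 2) = None" by (simp only: LaL) simp
        moreover have "?K (embo u) = ?K (emb1 (Inl 2))" using Inl True by simp
        moreover have "Inl 2 \<in> carrierX n" using n by simp
        ultimately have "\<not> condK n ?La ?Lb ?K (?K (embo u))" unfolding condK_def by metis
        thus ?thesis using Inl True by (simp add: GLc_def)
      next
        case False
        have "?K (embo u) = Inl x" using Inl x False by (simp add: KC_def c12_def)
        thus ?thesis using Inl x False cInl by (simp add: GLc_def)
      qed
    next
      case (Inr y)
      have y: "y \<in> ?X" using u Inr by simp
      show ?thesis
      proof (cases "y = 2")
        case True
        have "?Lb (Inr 2) = None" by (simp only: LbR) simp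
        moreover have "?K (embo u) = ?K (emb2 (Inr 2))" using Inr True by simp
        moreover have "Inr 2 \<in> carrierX n" using n by simp
        ultimately have "\<not> condK n ?La ?Lb ?K (?K (embo u))" unfolding condK_def by metis
        thus ?thesis using Inr True by (simp add: GLc_def)
      next
        case False
        have "?K (embo u) = Inl y" using Inr y False by (simp add: KC_def c12_def)
        thus ?thesis using Inr y False cInl by (simp add: GLc_def)
      qed
    qed
  qed simp
  thus ?thesis using st ga gb by simp
qed



abbreviation SG :: "nat \<Rightarrow> bpart set" where
  "SG n \<equiv> semigen n (units n \<union> {gamma12 n, gamma12_inv n})"

lemma FF_PIstar: "D \<subseteq> {1..n} \<Longrightarrow> f ` D \<subseteq> {1..n} \<Longrightarrow> FF n D f \<in> PIstar n"
  unfolding FF_def by (intro mk_PIstar wf_Fl)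

lemma units_PIstar: "P \<in> units n \<Longrightarrow> P \<in> PIstar n"
proof -
  assume "P \<in> units n"
  then obtain \<pi> where pi: "bij_betw \<pi> {1..n} {1..n}" "P = (\<lambda>x. {Inl x, Inr (\<pi> x)}) ` {1..n}"
    by (auto simp: units_def)
  have "P = FF n {1..n} \<pi>" using unit_FF[OF pi(1)] pi(2) by simp
  thus ?thesis using pi(1) by (auto intro!: FF_PIstar simp: bij_betw_def)
qed

lemma gamma_PIstar: "n \<ge> 3 \<Longrightarrow> gamma12 n \<in> PIstar n"
  unfolding gamma_FF by (rule FF_PIstar) (auto simp: c12_def)

lemma gamma_inv_PIstar: "n \<ge> 3 \<Longrightarrow> gamma12_inv n \<in> PIstar n"
proof -
  assume n: "n \<ge> 3"
  have "gamma12_inv n = mk n (Fl {1..n} c12 \<circ> swp)"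
    using gamma_FF[OF n] gamma_inv_flip[of n] flip_mk by (simp add: FF_def)
  moreover have "wfL n (Fl {1..n} c12 \<circ> swp)" by (intro wf_swp wf_Fl) (auto simp: c12_def)
  ultimately show ?thesis using mk_PIstar by simp
qed

lemma SG_PIstar: "n \<ge> 3 \<Longrightarrow> P \<in> SG n \<Longrightarrow> P \<in> PIstar n"
proof -
  assume n: "n \<ge> 3" and P: "P \<in> SG n"
  from P show "P \<in> PIstar n"
  proof (induction rule: semigen.induct)
    case (base a) thus ?case using units_PIstar gamma_PIstar[OF n] gamma_inv_PIstar[OF n] by blast
  next
    case (prod a b) from prod.IH show ?case by (rule star_PIstar)
  qed
qed

lemma SG_flip: "n \<ge> 3 \<Longrightarrow> P \<in> SG n \<Longrightarrow> flipP P \<in> SG n"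
proof -
  assume n: "n \<ge> 3" and P: "P \<in> SG n"
  from P show "flipP P \<in> SG n"
  proof (induction rule: semigen.induct)
    case (base a)
    then consider "a \<in> units n" | "a = gamma12 n" | "a = gamma12_inv n" by blast
    thus ?case
    proof cases
      case 1 thus ?thesis using units_flip by (blast intro: semigen.base)
    next
      case 2 thus ?thesis using gamma_inv_flip by (auto intro: semigen.base)
    next
      case 3 thus ?thesis using gamma_inv_flip by (auto intro: semigen.base)
    qed
  next
    case (prod a b)
    have "flipP (star n a b) = star n (flipP b) (flipP a)"
      using star_flip[OF SG_PIstar[OF n prod.hyps(1)] SG_PIstar[OF n prod.hyps(2)]] by simp
    thus ?case using prod.IH by (simp add: semigen.prod)
  qed
qed

lemma SG_prod: "a \<in> SG n \<Longrightarrow> b \<in> SG n \<Longrightarrow> star n a b \<in> SG n"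
  by (rule semigen.prod)

lemma G_unit: "bij_betw \<pi> {1..n} {1..n} \<Longrightarrow> FF n {1..n} \<pi> \<in> SG n"
proof -
  assume b: "bij_betw \<pi> {1..n} {1..n}"
  have "FF n {1..n} \<pi> \<in> units n" unfolding units_def using unit_FF[OF b] b by blast
  thus ?thesis by (intro semigen.base) simp
qed

lemma G_gamma: "n \<ge> 3 \<Longrightarrow> FF n {1..n} c12 \<in> SG n"
  using gamma_FF[of n] by (auto intro!: semigen.base)

lemma G_E2: "n \<ge> 3 \<Longrightarrow> FF n ({1..n} - {2}) id \<in> SG n"
proof -
  assume n: "n \<ge> 3"
  have "gamma12_inv n \<in> SG n" "gamma12 n \<in> SG n" by (auto intro: semigen.base)
  thus ?thesis using C1[OF n] semigen.prod by metis
qed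

definition tr :: "nat \<Rightarrow> nat \<Rightarrow> nat \<Rightarrow> nat" where
  "tr a b x = (if x = a then b else if x = b then a else x)"

lemma tr_tr[simp]: "tr a b (tr a b x) = x" by (simp add: tr_def)

lemma tr_bij: "a \<in> X \<Longrightarrow> b \<in> X \<Longrightarrow> bij_betw (tr a b) X X"
  by (rule bij_betw_byWitness[where f' = "tr a b"]) (auto simp: tr_def)

lemma G_Ej:
  assumes n: "n \<ge> 3" and j: "j \<in> {1..n}"
  shows "FF n ({1..n} - {j}) id \<in> SG n"
proof -
  let ?X = "{1..n::nat}"
  let ?t = "tr 2 j"
  have b: "bij_betw ?t ?X ?X" using j n by (intro tr_bij) auto
  hence im: "?t ` ?X = ?X" by (simp add: bij_betw_def)
  have s1: "star n (FF n ?X ?t) (FF n (?X - {2}) id) = FF n (?X - {j}) (id \<circ> ?t)"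
  proof -
    have t2: "?t x = 2 \<longleftrightarrow> x = j" for x by (simp add: tr_def)
    have tX: "x \<in> ?X \<Longrightarrow> ?t x \<in> ?X" for x using im by blast
    have "{x \<in> ?X. ?t x \<in> ?X - {2} \<and> (\<forall>y\<in>?X - {2}. id y = id (?t x) \<longrightarrow> y \<in> ?t ` ?X)} = ?X - {j}"
    proof (rule set_eqI)
      fix x show "x \<in> {x \<in> ?X. ?t x \<in> ?X - {2} \<and> (\<forall>y\<in>?X - {2}. id y = id (?t x) \<longrightarrow> y \<in> ?t ` ?X)} \<longleftrightarrow> x \<in> ?X - {j}"
        using t2[of x] tX[of x] im by auto
    qed
    moreover have "star n (FF n ?X ?t) (FF n (?X - {2}) id) =
       FF n {x \<in> ?X. ?t x \<in> ?X - {2} \<and> (\<forall>y\<in>?X - {2}. id y = id (?t x) \<longrightarrow> y \<in> ?t ` ?X)} (id \<circ> ?t)"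
      by (rule PF) (use im in auto)
    ultimately show ?thesis by simp
  qed
  have s2: "star n (FF n (?X - {j}) ?t) (FF n ?X ?t) = FF n (?X - {j}) (?t \<circ> ?t)"
  proof -
    have sub: "?t ` (?X - {j}) \<subseteq> ?X" using im by auto
    have tX: "x \<in> ?X \<Longrightarrow> ?t x \<in> ?X" for x using im by blast
    have "{x \<in> ?X - {j}. ?t x \<in> ?X \<and> (\<forall>y\<in>?X. ?t y = ?t (?t x) \<longrightarrow> y \<in> ?t ` (?X - {j}))} = ?X - {j}"
    proof (rule set_eqI)
      fix x
      have a: "?t y = ?t (?t x) \<Longrightarrow> y = ?t x" for y by (metis tr_tr)
      have b: "x \<in> ?X - {j} \<Longrightarrow> ?t x \<in> ?t ` (?X - {j})" by blast
      show "x \<in> {x \<in> ?X - {j}. ?t x \<in> ?X \<and> (\<forall>y\<in>?X. ?t y = ?t (?t x) \<longrightarrow> y \<in> ?t ` (?X - {j}))} \<longleftrightarrow> x \<in> ?X - {j}"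
      proof
        assume "x \<in> ?X - {j}"
        thus "x \<in> {x \<in> ?X - {j}. ?t x \<in> ?X \<and> (\<forall>y\<in>?X. ?t y = ?t (?t x) \<longrightarrow> y \<in> ?t ` (?X - {j}))}"
          using a b tX[of x] by blast
      qed blast
    qed
    moreover have "star n (FF n (?X - {j}) ?t) (FF n ?X ?t) =
       FF n {x \<in> ?X - {j}. ?t x \<in> ?X \<and> (\<forall>y\<in>?X. ?t y = ?t (?t x) \<longrightarrow> y \<in> ?t ` (?X - {j}))} (?t \<circ> ?t)"
      by (rule PF) (use sub im in auto)
    ultimately show ?thesis by simp
  qed
  have "FF n ?X ?t \<in> SG n" by (rule G_unit[OF b])
  hence "star n (FF n ?X ?t) (FF n (?X - {2}) id) \<in> SG n" using G_E2[OF n] SG_prod by blast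
  hence "FF n (?X - {j}) ?t \<in> SG n" using s1 by (simp only: id_comp)
  hence "FF n (?X - {j}) (?t \<circ> ?t) \<in> SG n" using G_unit[OF b] s2 SG_prod by metis
  moreover have "FF n (?X - {j}) (?t \<circ> ?t) = FF n (?X - {j}) id" by (rule FF_cong) simp
  ultimately show ?thesis by simp
qed

lemma G_S:
  assumes n: "n \<ge> 3" and S: "S \<subseteq> {1..n}"
  shows "FF n S id \<in> SG n"
proof -
  have "T \<subseteq> {1..n} \<Longrightarrow> FF n ({1..n} - T) id \<in> SG n" for T
  proof (induction T rule: infinite_finite_induct)
    case (infinite T) thus ?case using finite_subset by blast
  next
    case empty
    have "FF n {1..n} id \<in> SG n" by (rule G_unit) simp
    thus ?case by (simp add: id_def)
  next
    case (insert j T)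
    have j: "j \<in> {1..n}" and T: "T \<subseteq> {1..n}" using insert.prems by auto
    have "star n (FF n ({1..n} - {j}) id) (FF n ({1..n} - T) id) =
      FF n {x \<in> {1..n} - {j}. id x \<in> {1..n} - T \<and> (\<forall>y\<in>{1..n} - T. id y = id (id x) \<longrightarrow> y \<in> id ` ({1..n} - {j}))} (id \<circ> id)"
      by (rule PF) auto
    also have "{x \<in> {1..n} - {j}. id x \<in> {1..n} - T \<and> (\<forall>y\<in>{1..n} - T. id y = id (id x) \<longrightarrow> y \<in> id ` ({1..n} - {j}))} = {1..n} - insert j T"
      by auto
    finally have "star n (FF n ({1..n} - {j}) id) (FF n ({1..n} - T) id) = FF n ({1..n} - insert j T) id"
      by (simp only: comp_id)
    thus ?case using G_Ej[OF n j] insert.IH[OF T] SG_prod by metis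
  qed
  from this[of "{1..n} - S"] S show ?thesis by (simp add: double_diff)
qed



lemma extend_perm:
  assumes fin: "finite X" and D: "D \<subseteq> X" "f ` D \<subseteq> X" and inj: "inj_on f D"
  shows "\<exists>\<pi>. bij_betw \<pi> X X \<and> (\<forall>x\<in>D. \<pi> x = f x)"
proof -
  have fD: "finite D" using fin D finite_subset by blast
  have "card (X - D) = card (X - f ` D)"
    using D fin fD card_Diff_subset[OF fD D(1)] card_Diff_subset[OF finite_imageI[OF fD] D(2)] card_image[OF inj]
    by simp
  then obtain h where h: "bij_betw h (X - D) (X - f ` D)"
    using finite_same_card_bij[of "X - D" "X - f ` D"] fin by blast
  define \<pi> where "\<pi> x = (if x \<in> D then f x else h x)" for x
  have b1: "bij_betw \<pi> D (f ` D)"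
    using inj_on_imp_bij_betw[OF inj] by (rule bij_betw_cong[THEN iffD1, rotated]) (simp add: \<pi>_def)
  have b2: "bij_betw \<pi> (X - D) (X - f ` D)"
    using h by (rule bij_betw_cong[THEN iffD1, rotated]) (simp add: \<pi>_def)
  have "bij_betw \<pi> (D \<union> (X - D)) (f ` D \<union> (X - f ` D))"
    by (rule bij_betw_combine[OF b1 b2]) blast
  moreover have "D \<union> (X - D) = X" "f ` D \<union> (X - f ` D) = X" using D by auto
  ultimately show ?thesis by (intro exI[of _ \<pi>]) (simp add: \<pi>_def)
qed

lemma G_inj:
  assumes n: "n \<ge> 3" and D: "D \<subseteq> {1..n}" "f ` D \<subseteq> {1..n}" and inj: "inj_on f D"
  shows "FF n D f \<in> SG n"
proof -
  obtain \<pi> where pi: "bij_betw \<pi> {1..n} {1..n}" "\<forall>x\<in>D. \<pi> x = f x"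
    using extend_perm[OF _ D inj] by auto
  have im: "\<pi> ` {1..n} = {1..n}" and ij: "inj_on \<pi> {1..n}" using pi(1) by (auto simp: bij_betw_def)
  have "star n (FF n D id) (FF n {1..n} \<pi>) =
     FF n {x \<in> D. id x \<in> {1..n} \<and> (\<forall>y\<in>{1..n}. \<pi> y = \<pi> (id x) \<longrightarrow> y \<in> id ` D)} (\<pi> \<circ> id)"
    by (rule PF) (use D im in auto)
  also have "{x \<in> D. id x \<in> {1..n} \<and> (\<forall>y\<in>{1..n}. \<pi> y = \<pi> (id x) \<longrightarrow> y \<in> id ` D)} = D"
  proof (rule set_eqI)
    fix x show "x \<in> {x \<in> D. id x \<in> {1..n} \<and> (\<forall>y\<in>{1..n}. \<pi> y = \<pi> (id x) \<longrightarrow> y \<in> id ` D)} \<longleftrightarrow> x \<in> D"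
      using D ij by (auto dest: inj_onD)
  qed
  also have "FF n D (\<pi> \<circ> id) = FF n D f" by (rule FF_cong) (use pi in simp)
  finally have e: "star n (FF n D id) (FF n {1..n} \<pi>) = FF n D f" .
  show ?thesis using SG_prod[OF G_S[OF n D(1)] G_unit[OF pi(1)]] e by simp
qed

definition mg :: "nat \<Rightarrow> nat \<Rightarrow> nat \<Rightarrow> nat" where
  "mg a b y = (if y = b then a else y)"

lemma G_merge:
  assumes n: "n \<ge> 3" and ab: "a \<in> {1..n}" "b \<in> {1..n}" "a \<noteq> b"
  shows "FF n {1..n} (mg a b) \<in> SG n"
proof -
  let ?X = "{1..n::nat}"
  define b' where "b' = tr a 1 b"
  define \<sigma> where "\<sigma> = tr b' 2 \<circ> tr a 1"
  define \<sigma>' where "\<sigma>' = tr a 1 \<circ> tr b' 2"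
  have b'X: "b' \<in> ?X" using ab n by (auto simp: b'_def tr_def)
  have b'1: "b' \<noteq> 1" using ab by (auto simp: b'_def tr_def)
  have sa: "\<sigma> a = 1" using b'1 by (simp add: \<sigma>_def tr_def)
  have sb: "\<sigma> b = 2" unfolding \<sigma>_def comp_def b'_def[symmetric] by (simp add: tr_def)
  have ss: "\<sigma>' (\<sigma> x) = x" for x by (simp add: \<sigma>_def \<sigma>'_def)
  have bs: "bij_betw \<sigma> ?X ?X" unfolding \<sigma>_def
    by (rule bij_betw_trans[OF tr_bij tr_bij]) (use ab n b'X in auto)
  have bs': "bij_betw \<sigma>' ?X ?X" unfolding \<sigma>'_def
    by (rule bij_betw_trans[OF tr_bij tr_bij]) (use ab n b'X in auto)
  have im: "\<sigma> ` ?X = ?X" using bs by (simp add: bij_betw_def)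
  have im': "\<sigma>' ` ?X = ?X" and ij': "inj_on \<sigma>' ?X" using bs' by (auto simp: bij_betw_def)
  have cX: "c12 ` ?X \<subseteq> ?X" by (auto simp: c12_def)
  have sX: "x \<in> ?X \<Longrightarrow> \<sigma> x \<in> ?X" for x using im by blast
  have cX': "x \<in> ?X \<Longrightarrow> c12 x \<in> ?X" for x using cX by blast
  have "star n (FF n ?X \<sigma>) (FF n ?X c12) =
     FF n {x \<in> ?X. \<sigma> x \<in> ?X \<and> (\<forall>y\<in>?X. c12 y = c12 (\<sigma> x) \<longrightarrow> y \<in> \<sigma> ` ?X)} (c12 \<circ> \<sigma>)"
    by (rule PF) (use im cX in auto)
  also have "{x \<in> ?X. \<sigma> x \<in> ?X \<and> (\<forall>y\<in>?X. c12 y = c12 (\<sigma> x) \<longrightarrow> y \<in> \<sigma> ` ?X)} = ?X"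
    using im sX by auto
  finally have e1: "star n (FF n ?X \<sigma>) (FF n ?X c12) = FF n ?X (c12 \<circ> \<sigma>)" .
  have "star n (FF n ?X (c12 \<circ> \<sigma>)) (FF n ?X \<sigma>') =
     FF n {x \<in> ?X. (c12 \<circ> \<sigma>) x \<in> ?X \<and> (\<forall>y\<in>?X. \<sigma>' y = \<sigma>' ((c12 \<circ> \<sigma>) x) \<longrightarrow> y \<in> (c12 \<circ> \<sigma>) ` ?X)} (\<sigma>' \<circ> (c12 \<circ> \<sigma>))"
    by (rule PF) (use im' sX cX' in auto)
  also have "{x \<in> ?X. (c12 \<circ> \<sigma>) x \<in> ?X \<and> (\<forall>y\<in>?X. \<sigma>' y = \<sigma>' ((c12 \<circ> \<sigma>) x) \<longrightarrow> y \<in> (c12 \<circ> \<sigma>) ` ?X)} = ?X"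
  proof (rule set_eqI)
    fix x
    show "x \<in> {x \<in> ?X. (c12 \<circ> \<sigma>) x \<in> ?X \<and> (\<forall>y\<in>?X. \<sigma>' y = \<sigma>' ((c12 \<circ> \<sigma>) x) \<longrightarrow> y \<in> (c12 \<circ> \<sigma>) ` ?X)} \<longleftrightarrow> x \<in> ?X"
    proof
      assume x: "x \<in> ?X"
      have cx: "(c12 \<circ> \<sigma>) x \<in> ?X" using x sX cX' by simp
      have "\<forall>y\<in>?X. \<sigma>' y = \<sigma>' ((c12 \<circ> \<sigma>) x) \<longrightarrow> y \<in> (c12 \<circ> \<sigma>) ` ?X"
        using cx x ij' by (auto dest: inj_onD)
      thus "x \<in> {x \<in> ?X. (c12 \<circ> \<sigma>) x \<in> ?X \<and> (\<forall>y\<in>?X. \<sigma>' y = \<sigma>' ((c12 \<circ> \<sigma>) x) \<longrightarrow> y \<in> (c12 \<circ> \<sigma>) ` ?X)}"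
        using x cx by blast
    qed blast
  qed
  also have "FF n ?X (\<sigma>' \<circ> (c12 \<circ> \<sigma>)) = FF n ?X (mg a b)"
  proof (rule FF_cong)
    fix x assume x: "x \<in> ?X"
    show "(\<sigma>' \<circ> (c12 \<circ> \<sigma>)) x = mg a b x"
    proof (cases "x = b")
      case True thus ?thesis using sb sa ss[of a] by (simp add: c12_def mg_def)
    next
      case False
      have "\<sigma> x \<noteq> 2"
      proof
        assume "\<sigma> x = 2"
        hence "\<sigma>' (\<sigma> x) = \<sigma>' (\<sigma> b)" using sb by simp
        thus False using ss False by simp
      qed
      thus ?thesis using False ss by (simp add: c12_def mg_def)
    qed
  qed
  finally have e2: "star n (FF n ?X (c12 \<circ> \<sigma>)) (FF n ?X \<sigma>') = FF n ?X (mg a b)" .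
  have "FF n ?X (c12 \<circ> \<sigma>) \<in> SG n"
    using SG_prod[OF G_unit[OF bs] G_gamma[OF n]] e1 by simp
  thus ?thesis using SG_prod[OF _ G_unit[OF bs']] e2 by metis
qed



lemma mg_eq: "mg a b y = mg a b z \<Longrightarrow> y \<noteq> z \<Longrightarrow> y = a \<or> y = b"
  by (auto simp: mg_def split: if_splits)

lemma G_F:
  assumes n: "n \<ge> 3" and D: "D \<subseteq> {1..n}"
  shows "f ` D \<subseteq> {1..n} \<Longrightarrow> FF n D f \<in> SG n"
proof (induction "card D - card (f ` D)" arbitrary: f rule: less_induct)
  case less
  let ?X = "{1..n::nat}"
  have fD: "finite D" using D finite_subset by blast
  show ?case
  proof (cases "inj_on f D")
    case True thus ?thesis using G_inj[OF n D less.prems] by simp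
  next
    case False
    then obtain x1 x2 where x12: "x1 \<in> D" "x2 \<in> D" "x1 \<noteq> x2" "f x1 = f x2"
      unfolding inj_on_def by blast
    have lt: "card (f ` D) < card D"
      using False card_image_le[OF fD, of f] inj_on_iff_eq_card[OF fD, of f] by linarith
    have "card D \<le> card ?X" using D by (intro card_mono) auto
    hence "card (f ` D) < card ?X" using lt by linarith
    have "\<not> ?X \<subseteq> f ` D"
    proof
      assume "?X \<subseteq> f ` D"
      hence "card ?X \<le> card (f ` D)" by (rule card_mono[OF finite_imageI[OF fD]])
      thus False using \<open>card (f ` D) < card ?X\<close> by linarith
    qed
    then obtain w where w: "w \<in> ?X" "w \<notin> f ` D" by blast
    define g where "g = f(x2 := w)"
    have gD: "g ` D = insert w (f ` D)"
    proof
      show "g ` D \<subseteq> insert w (f ` D)" using x12 by (auto simp: g_def)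
      show "insert w (f ` D) \<subseteq> g ` D"
      proof
        fix z assume "z \<in> insert w (f ` D)"
        then consider "z = w" | x where "x \<in> D" "z = f x" by blast
        thus "z \<in> g ` D"
        proof cases
          case 1 thus ?thesis using x12 by (auto simp: g_def intro!: image_eqI[of _ _ x2])
        next
          case (2 x)
          show ?thesis
          proof (cases "x = x2")
            case True thus ?thesis using 2 x12 by (auto simp: g_def intro!: image_eqI[of _ _ x1])
          next
            case False thus ?thesis using 2 by (auto simp: g_def intro!: image_eqI[of _ _ x])
          qed
        qed
      qed
    qed
    have cg: "card (g ` D) = Suc (card (f ` D))" using gD w fD by simp
    have gX: "g ` D \<subseteq> ?X" using gD w less.prems by auto
    have IH: "FF n D g \<in> SG n"
      by (rule less.hyps[OF _ gX]) (use cg lt in linarith)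
    let ?a = "f x1"
    have a: "?a \<in> ?X" using less.prems x12 by auto
    have ab: "?a \<noteq> w" using w x12 by auto
    have ga: "g x1 = ?a" and gb: "g x2 = w" using x12 by (auto simp: g_def)
    have "star n (FF n D g) (FF n ?X (mg ?a w)) =
      FF n {x \<in> D. g x \<in> ?X \<and> (\<forall>y\<in>?X. mg ?a w y = mg ?a w (g x) \<longrightarrow> y \<in> g ` D)} (mg ?a w \<circ> g)"
      by (rule PF) (use D gX a in \<open>auto simp: mg_def\<close>)
    also have "{x \<in> D. g x \<in> ?X \<and> (\<forall>y\<in>?X. mg ?a w y = mg ?a w (g x) \<longrightarrow> y \<in> g ` D)} = D"
    proof (rule set_eqI)
      fix x
      show "x \<in> {x \<in> D. g x \<in> ?X \<and> (\<forall>y\<in>?X. mg ?a w y = mg ?a w (g x) \<longrightarrow> y \<in> g ` D)} \<longleftrightarrow> x \<in> D"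
      proof
        assume x: "x \<in> D"
        have "y \<in> g ` D" if "mg ?a w y = mg ?a w (g x)" for y
        proof (cases "y = g x")
          case True thus ?thesis using x by simp
        next
          case False
          hence "y = ?a \<or> y = w" using mg_eq that by blast
          thus ?thesis using ga gb x12 by (metis image_eqI)
        qed
        thus "x \<in> {x \<in> D. g x \<in> ?X \<and> (\<forall>y\<in>?X. mg ?a w y = mg ?a w (g x) \<longrightarrow> y \<in> g ` D)}"
          using x gX by blast
      qed blast
    qed
    also have "FF n D (mg ?a w \<circ> g) = FF n D f"
    proof (rule FF_cong)
      fix x assume x: "x \<in> D"
      show "(mg ?a w \<circ> g) x = f x"
      proof (cases "x = x2")
        case True thus ?thesis using x12 by (simp add: g_def mg_def)
      next
        case False
        have "f x \<noteq> w" using w x by auto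
        thus ?thesis using False by (simp add: g_def mg_def)
      qed
    qed
    finally have e: "star n (FF n D g) (FF n ?X (mg ?a w)) = FF n D f" .
    show ?thesis using SG_prod[OF IH G_merge[OF n a w(1) ab]] e by simp
  qed
qed

lemma mk_cong2:
  assumes "\<And>u. u \<in> carrierX n \<Longrightarrow> L1 u = map_option h (L2 u)"
    and inj: "inj_on h {l. \<exists>u\<in>carrierX n. L2 u = Some l}"
  shows "mk n L1 = mk n L2"
proof -
  have "(L1 u \<noteq> None \<and> L1 u = L1 v) = (L2 u \<noteq> None \<and> L2 u = L2 v)"
    if u: "u \<in> carrierX n" and v: "v \<in> carrierX n" for u v
  proof
    assume "L2 u \<noteq> None \<and> L2 u = L2 v" thus "L1 u \<noteq> None \<and> L1 u = L1 v"
      using assms(1)[OF u] assms(1)[OF v] by (cases "L2 u"; cases "L2 v") auto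
  next
    assume h1: "L1 u \<noteq> None \<and> L1 u = L1 v"
    then obtain l1 where l1: "L2 u = Some l1" using assms(1)[OF u] by auto
    then obtain l2 where l2: "L2 v = Some l2" using h1 assms(1)[OF u] assms(1)[OF v] by (cases "L2 v") auto
    have "h l1 = h l2" using h1 l1 l2 assms(1)[OF u] assms(1)[OF v] by simp
    hence "l1 = l2" using inj l1 l2 u v by (auto dest: inj_onD)
    thus "L2 u \<noteq> None \<and> L2 u = L2 v" using l1 l2 by simp
  qed
  hence "rel n L1 = rel n L2" unfolding rel_def by blast
  thus ?thesis by (simp add: mk_def)
qed

lemma PIstar_SG:
  assumes n: "n \<ge> 3" and P: "P \<in> PIstar n"
  shows "P \<in> SG n"
proof -
  let ?X = "{1..n::nat}"
  obtain L :: "pt \<Rightarrow> pt set option" where L: "wfL n L" "P = mk n L" using PIstar_mk[OF P] by blast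
  let ?\<Lambda> = "{l. \<exists>u\<in>carrierX n. L u = Some l}"
  define \<iota> where "\<iota> l = (SOME x. x \<in> ?X \<and> L (Inl x) = Some l)" for l
  have \<iota>: "\<iota> l \<in> ?X \<and> L (Inl (\<iota> l)) = Some l" if hl: "l \<in> ?\<Lambda>" for l
  proof -
    obtain u where u: "u \<in> carrierX n" "L u = Some l" using hl by blast
    then obtain x where "x \<in> ?X" "L (Inl x) = Some l" using L(1) unfolding wfL_def by force
    hence "\<exists>x. x \<in> ?X \<and> L (Inl x) = Some l" by blast
    thus ?thesis unfolding \<iota>_def by (rule someI_ex)
  qed
  have inj: "inj_on \<iota> ?\<Lambda>"
  proof (rule inj_onI)
    fix l1 l2 assume h1: "l1 \<in> ?\<Lambda>" and h2: "l2 \<in> ?\<Lambda>" and e: "\<iota> l1 = \<iota> l2"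
    have "L (Inl (\<iota> l1)) = Some l1" using \<iota>[OF h1] by blast
    moreover have "L (Inl (\<iota> l2)) = Some l2" using \<iota>[OF h2] by blast
    ultimately show "l1 = l2" using e by (metis option.inject)
  qed
  define D where "D = {x \<in> ?X. L (Inl x) \<noteq> None}"
  define f where "f x = \<iota> (the (L (Inl x)))" for x
  define E where "E = {y \<in> ?X. L (Inr y) \<noteq> None}"
  define g where "g y = \<iota> (the (L (Inr y)))" for y
  have DX: "D \<subseteq> ?X" and EX: "E \<subseteq> ?X" by (auto simp: D_def E_def)
  have wf: "\<And>u. u \<in> carrierX n \<Longrightarrow> L u \<noteq> None \<Longrightarrow> (\<exists>x\<in>?X. L (Inl x) = L u) \<and> (\<exists>y\<in>?X. L (Inr y) = L u)"
    using L(1) unfolding wfL_def by blast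
  have fL: "the (L (Inl x)) \<in> ?\<Lambda>" if x: "x \<in> D" for x
  proof -
    obtain l where l: "L (Inl x) = Some l" "x \<in> ?X" using x by (auto simp: D_def)
    hence "Inl x \<in> carrierX n" by simp
    thus ?thesis using l(1) by (intro CollectI bexI[of _ "Inl x"]) simp_all
  qed
  have gL: "the (L (Inr y)) \<in> ?\<Lambda>" if y: "y \<in> E" for y
  proof -
    obtain l where l: "L (Inr y) = Some l" "y \<in> ?X" using y by (auto simp: E_def)
    hence "Inr y \<in> carrierX n" by simp
    thus ?thesis using l(1) by (intro CollectI bexI[of _ "Inr y"]) simp_all
  qed
  have fX: "f ` D \<subseteq> ?X"
  proof (rule image_subsetI)
    fix x assume "x \<in> D" thus "f x \<in> ?X" unfolding f_def using \<iota>[OF fL] by blast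
  qed
  have gX: "g ` E \<subseteq> ?X"
  proof (rule image_subsetI)
    fix y assume "y \<in> E" thus "g y \<in> ?X" unfolding g_def using \<iota>[OF gL] by blast
  qed
  have fg: "f ` D \<subseteq> g ` E"
  proof
    fix z assume "z \<in> f ` D"
    then obtain x where x: "x \<in> D" "z = f x" by blast
    then obtain l where l: "L (Inl x) = Some l" by (auto simp: D_def)
    have "x \<in> ?X" using x by (simp add: D_def)
    then obtain y where y: "y \<in> ?X" "L (Inr y) = Some l"
      using wf[of "Inl x"] l by auto
    have "y \<in> E" "g y = z" using y x l by (auto simp: E_def g_def f_def)
    thus "z \<in> g ` E" by blast
  qed
  have gf: "g ` E \<subseteq> f ` D"
  proof
    fix z assume "z \<in> g ` E"
    then obtain y where y: "y \<in> E" "z = g y" by blast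
    then obtain l where l: "L (Inr y) = Some l" by (auto simp: E_def)
    have "y \<in> ?X" using y by (simp add: E_def)
    then obtain x where x: "x \<in> ?X" "L (Inl x) = Some l"
      using wf[of "Inr y"] l by auto
    have "x \<in> D" "f x = z" using y x l by (auto simp: D_def g_def f_def)
    thus "z \<in> f ` D" by blast
  qed
  let ?Lb = "Fl E g \<circ> swp"
  have A: "FF n D f \<in> SG n" by (rule G_F[OF n DX fX])
  have B: "flipP (FF n E g) \<in> SG n" by (rule SG_flip[OF n G_F[OF n EX gX]])
  have fb: "flipP (FF n E g) = mk n ?Lb" by (simp add: FF_def flip_mk)
  have wfb: "wfL n ?Lb" by (intro wf_swp wf_Fl EX gX)
  have prod: "star n (FF n D f) (flipP (FF n E g)) = mk n (Pl n D f ?Lb)"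
  proof -
    have p: "star n (mk n (Fl D f)) (mk n ?Lb) = mk n (Pl n D f ?Lb)" by (rule pull[OF DX fX wfb])
    show ?thesis using p fb unfolding FF_def by simp
  qed
  have good: "goodP n D f ?Lb (Some z)" for z
    unfolding goodP_def using gf by auto
  have "mk n (Pl n D f ?Lb) = mk n L"
  proof (rule mk_cong2[where h = \<iota>])
    fix u assume u: "u \<in> carrierX n"
    show "Pl n D f ?Lb u = map_option \<iota> (L u)"
    proof (cases u)
      case (Inl x)
      have x: "x \<in> ?X" using u Inl by simp
      show ?thesis
      proof (cases "x \<in> D")
        case True
        have "f x \<in> g ` E" using fg True by blast
        moreover have "f x \<in> ?X" using fX True by blast
        ultimately have "?Lb (Inl (f x)) = Some (f x)" by simp
        moreover obtain l where "L (Inl x) = Some l" using True by (auto simp: D_def)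
        ultimately show ?thesis using Inl True good by (simp add: Pl_def f_def)
      next
        case False
        hence "L (Inl x) = None" using x by (simp add: D_def)
        thus ?thesis using Inl False by (simp add: Pl_def)
      qed
    next
      case (Inr y)
      have y: "y \<in> ?X" using u Inr by simp
      show ?thesis
      proof (cases "y \<in> E")
        case True
        have "?Lb (Inr y) = Some (g y)" using True by simp
        moreover obtain l where "L (Inr y) = Some l" using True by (auto simp: E_def)
        ultimately show ?thesis using Inr True good by (simp add: Pl_def g_def)
      next
        case False
        hence "L (Inr y) = None" using y by (simp add: E_def)
        moreover have "?Lb (Inr y) = None" using False by simp
        ultimately show ?thesis using Inr by (simp add: Pl_def goodP_def)
      qed
    qed
  qed (rule inj)
  hence "P = star n (FF n D f) (flipP (FF n E g))" using prod L(2) by simp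
  thus ?thesis using SG_prod[OF A B] by simp
qed

theorem mainTheorem18:
  fixes n :: nat
  assumes "n \<ge> 3"
  shows "semigen n (units n \<union> {gamma12 n, gamma12_inv n}) = PIstar n"
  using SG_PIstar[OF assms] PIstar_SG[OF assms] by blast

end
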